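(* Let $L$ be a split regular Hom-Lie color algebra with symmetric root system $\Lambda$. If $\mathrm{Z}(L)=0$ and $[L,L]=L$, then $$L=\bigoplus_{[\alpha]\in\Lambda/\sim}I_{[\alpha]},$$ where $I_{[\alpha]}:=L_{\Lambda_\alpha}$ are ideals of $L$ with $[I_{[\alpha]},I_{[\beta]}]=0$ for $[\alpha]\neq[\beta]$.
   Context: Let $\mathbb{K}$ be a field and $\Gamma$ an abelian group. A bi-character is $\varepsilon:\Gamma\times\Gamma\to\mathbb{K}\setminus\{0\}$ with $\varepsilon(a,b)\varepsilon(b,a)=1$, $\varepsilon(a,b+c)=\varepsilon(a,b)\varepsilon(a,c)$, $\varepsilon(a+b,c)=\varepsilon(a,c)\varepsilon(b,c)$. A Hom-Lie color algebra $(L,[\cdot,\cdot],\phi,\varepsilon)$ is a $\Gamma$-graded space $L=\bigoplus_gL_g$ with bilinear $[\cdot,\cdot]$, $[L_g,L_h]\subset L_{g+h}$, linear $\phi$ with $\phi(L_g)\subset L_g$, $\phi([x,y])=[\phi x,\phi y]$, such that for homogeneous $x,y,z$ of degrees $\bar x,\bar y,\bar z$: $[x,y]=-\varepsilon(\bar x,\bar y)[y,x]$ and $\varepsilon(\bar z,\bar x)[\phi(x),[y,z]]+\varepsilon(\bar x,\bar y)[\phi(y),[z,x]]+\varepsilon(\bar y,\bar z)[\phi(z),[x,y]]=0$; regular means $\phi$ bijective. A subalgebra is a graded subspace $A$ with $[A,A]\subset A$, $\phi(A)=A$; abelian if $[A,A]=0$. An ideal is a graded subspace $I$ with $[I,L]\subset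 I$ and $\phi(I)=I$. The annihilator is $\mathrm{Z}(L)=\{x\in L:[x,L]=0\}$. $H=\bigoplus_gH_g$ is a maximal abelian graded subalgebra (so $\phi(H_0)=H_0$). For linear $\alpha:H_0\to\mathbb{K}$, $L_\alpha=\{v:[h,v]=\alpha(h)\phi(v)\ \forall h\in H_0\}$; $\Lambda=\{\alpha\in H_0^*\setminus\{0\}:L_\alpha\neq0\}$; $L$ is split if $L=H\oplus(\bigoplus_{\alpha\in\Lambda}L_\alpha)$. $\Lambda$ is symmetric if $\alpha\in\Lambda\Rightarrow-\alpha\in\Lambda$. For $z\in\mathbb{Z}$, $\alpha\phi^{z}:=\alpha\circ(\phi|_{H_0})^{z}$; $\mathbb{N}=\{0,1,2,\dots\}$. Connection: for $\alpha,\beta\in\Lambda$, $\alpha$ is connected to $\beta$ if there exist $k\ge1$ and $\alpha_1,\dots,\alpha_k\in\Lambda$ such that: if $k=1$, $\alpha_1\in\{\alpha\phi^{-n}:n\in\mathbb{N}\}\cap\{\pm\beta\phi^{-m}:m\in\mathbb{N}\}$; if $k\ge2$, then $\alpha_1\in\{\alpha\phi^{-n}:n\in\mathbb{N}\}$, for each $i=1,\dots,k-2$ one has $\alpha_1\phi^{-i}+\alpha_2\phi^{-i}+\alpha_3\phi^{-i+1}+\cdots+\alpha_{i+1}\phi^{-1}\in\Lambda$, and $\alpha_1\phi^{-k+1}+\alpha_2\phi^{-k+1}+\alpha_3\phi^{-k+2}+\cdots+\alpha_k\phi^{-1}\in\{\pm\beta\phi^{-m}:m\in\mathbb{N}\}$.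 Connectedness $\sim$ is an equivalence relation on $\Lambda$; $\Lambda_\alpha:=\{\beta\in\Lambda:\beta\sim\alpha\}$. Define $H_{\Lambda_\alpha}:=\mathrm{span}_{\mathbb{K}}\{[L_\beta,L_{-\beta}]:\beta\in\Lambda_\alpha\}\subset H$, $V_{\Lambda_\alpha}:=\bigoplus_{\beta\in\Lambda_\alpha}L_\beta$, and $L_{\Lambda_\alpha}:=H_{\Lambda_\alpha}\oplus V_{\Lambda_\alpha}$. *)

theory Defs
  imports Complex_Main
begin

text \<open>Setting: L is the whole carrier type 'v, a vector space over the field 'k
  (via scalar multiplication sc), graded by the abelian group 'g via the family Lg.\<close>

definition bicharacter :: "('g::ab_group_add \<Rightarrow> 'g \<Rightarrow> 'k::field) \<Rightarrow> bool" where
  "bicharacter eps \<longleftrightarrow>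
     (\<forall>a b. eps a b \<noteq> 0) \<and>
     (\<forall>a b. eps a b * eps b a = 1) \<and>
     (\<forall>a b c. eps a (b + c) = eps a b * eps a c) \<and>
     (\<forall>a b c. eps (a + b) c = eps a c * eps b c)"

definition internal_direct_sum ::
  "('k::field \<Rightarrow> 'v::ab_group_add \<Rightarrow> 'v) \<Rightarrow> 'i set \<Rightarrow> ('i \<Rightarrow> 'v set) \<Rightarrow> 'v set \<Rightarrow> bool" where
  "internal_direct_sum sc I V W \<longleftrightarrow>
     (\<forall>i\<in>I. module.subspace sc (V i)) \<and>
     (\<forall>F v. finite F \<and> F \<subseteq> I \<and> (\<forall>i\<in>F. v i \<in> V i) \<and> sum v F = 0 \<longrightarrow> (\<forall>i\<in>F. v i = 0)) \<and>
     W = module.span sc (\<Union>i\<in>I. V i)"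

definition hom_lie_color_algebra ::
  "('k::field \<Rightarrow> 'v::ab_group_add \<Rightarrow> 'v) \<Rightarrow> ('g::ab_group_add \<Rightarrow> 'v set) \<Rightarrow>
   ('v \<Rightarrow> 'v \<Rightarrow> 'v) \<Rightarrow> ('v \<Rightarrow> 'v) \<Rightarrow> ('g \<Rightarrow> 'g \<Rightarrow> 'k) \<Rightarrow> bool" where
  "hom_lie_color_algebra sc Lg br phi eps \<longleftrightarrow>
     vector_space sc \<and>
     internal_direct_sum sc UNIV Lg UNIV \<and>
     bicharacter eps \<and>
     (\<forall>x. Vector_Spaces.linear sc sc (br x)) \<and>
     (\<forall>y. Vector_Spaces.linear sc sc (\<lambda>x. br x y)) \<and>
     (\<forall>g h. \<forall>x\<in>Lg g. \<forall>y\<in>Lg h. br x y \<in> Lg (g + h)) \<and>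
     Vector_Spaces.linear sc sc phi \<and>
     (\<forall>g. phi ` Lg g \<subseteq> Lg g) \<and>
     (\<forall>x y. phi (br x y) = br (phi x) (phi y)) \<and>
     (\<forall>a b. \<forall>x\<in>Lg a. \<forall>y\<in>Lg b. br x y = - sc (eps a b) (br y x)) \<and>
     (\<forall>a b c. \<forall>x\<in>Lg a. \<forall>y\<in>Lg b. \<forall>z\<in>Lg c.
        sc (eps c a) (br (phi x) (br y z)) + sc (eps a b) (br (phi y) (br z x))
        + sc (eps b c) (br (phi z) (br x y)) = 0)"

definition regular_hlca where
  "regular_hlca sc Lg br phi eps \<longleftrightarrow> hom_lie_color_algebra sc Lg br phi eps \<and> bij phi"

definition graded_subspace ::
  "('k::field \<Rightarrow> 'v::ab_group_add \<Rightarrow> 'v) \<Rightarrow> ('g \<Rightarrow> 'v set) \<Rightarrow> 'v set \<Rightarrow> bool" where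
  "graded_subspace sc Lg A \<longleftrightarrow> module.subspace sc A \<and> A \<subseteq> module.span sc (\<Union>g. A \<inter> Lg g)"

definition subalgebra where
  "subalgebra sc Lg br phi A \<longleftrightarrow> graded_subspace sc Lg A \<and>
     (\<forall>x\<in>A. \<forall>y\<in>A. br x y \<in> A) \<and> phi ` A = A"

definition abelian_subalgebra where
  "abelian_subalgebra sc Lg br phi A \<longleftrightarrow> subalgebra sc Lg br phi A \<and>
     (\<forall>x\<in>A. \<forall>y\<in>A. br x y = 0)"

definition max_abelian_subalgebra where
  "max_abelian_subalgebra sc Lg br phi H \<longleftrightarrow> abelian_subalgebra sc Lg br phi H \<and>
     (\<forall>A. abelian_subalgebra sc Lg br phi A \<and> H \<subseteq> A \<longrightarrow> A = H)"

definition ideal where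
  "ideal sc Lg br phi I \<longleftrightarrow> graded_subspace sc Lg I \<and>
     (\<forall>x\<in>I. \<forall>y. br x y \<in> I) \<and> phi ` I = I"

definition annihilator where
  "annihilator br = {x. \<forall>y. br x y = 0}"

definition derived where
  "derived sc br = module.span sc {br x y | x y. True}"

definition H0 :: "('g::ab_group_add \<Rightarrow> 'v set) \<Rightarrow> 'v set \<Rightarrow> 'v set" where
  "H0 Lg H = H \<inter> Lg 0"

text \<open>Elements of the dual H_0^*: linear on H_0, represented canonically
  as functions on 'v vanishing outside H_0.\<close>
definition dual_H0 ::
  "('k::field \<Rightarrow> 'v::ab_group_add \<Rightarrow> 'v) \<Rightarrow> 'v set \<Rightarrow> ('v \<Rightarrow> 'k) set" where
  "dual_H0 sc S = {\<alpha>. (\<forall>x\<in>S. \<forall>y\<in>S. \<alpha> (x + y) = \<alpha> x + \<alpha> y) \<and>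
                      (\<forall>c. \<forall>x\<in>S. \<alpha> (sc c x) = c * \<alpha> x) \<and>
                      (\<forall>x. x \<notin> S \<longrightarrow> \<alpha> x = 0)}"

definition root_space where
  "root_space sc Lg br phi H \<alpha> = {v. \<forall>h\<in>H0 Lg H. br h v = sc (\<alpha> h) (phi v)}"

definition roots where
  "roots sc Lg br phi H = {\<alpha> \<in> dual_H0 sc (H0 Lg H). \<alpha> \<noteq> (\<lambda>_. 0) \<and>
      root_space sc Lg br phi H \<alpha> \<noteq> {0}}"

definition split_wrt where
  "split_wrt sc Lg br phi H \<longleftrightarrow>
     internal_direct_sum sc (insert None (Some ` roots sc Lg br phi H))
       (\<lambda>i. case i of None \<Rightarrow> H | Some \<alpha> \<Rightarrow> root_space sc Lg br phi H \<alpha>) UNIV"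

definition symmetric_roots where
  "symmetric_roots sc Lg br phi H \<longleftrightarrow>
     (\<forall>\<alpha>\<in>roots sc Lg br phi H. (\<lambda>x. - \<alpha> x) \<in> roots sc Lg br phi H)"

definition rpow :: "('v \<Rightarrow> 'v) \<Rightarrow> 'v set \<Rightarrow> ('v \<Rightarrow> 'k::field) \<Rightarrow> nat \<Rightarrow> ('v \<Rightarrow> 'k)" where
  "rpow phi S \<alpha> n = (\<lambda>x. if x \<in> S then \<alpha> ((inv_into S phi ^^ n) x) else 0)"

text \<open>For a list as = [\<alpha>_1,...,\<alpha>_k], the i-th partial expression
  \<alpha>_1\<phi>^{-i} + \<alpha>_2\<phi>^{-i} + \<alpha>_3\<phi>^{-i+1} + ... + \<alpha>_{i+1}\<phi>^{-1}.\<close>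
definition conn_sum :: "('v \<Rightarrow> 'v) \<Rightarrow> 'v set \<Rightarrow> ('v \<Rightarrow> 'k::field) list \<Rightarrow> nat \<Rightarrow> ('v \<Rightarrow> 'k)" where
  "conn_sum phi S as i = (\<lambda>x. rpow phi S (as ! 0) i x +
      (\<Sum>j\<in>{2..i+1}. rpow phi S (as ! (j - 1)) (i + 2 - j) x))"

definition connected where
  "connected sc Lg br phi H \<alpha> \<beta> \<longleftrightarrow>
    (let S = H0 Lg H; \<Lambda> = roots sc Lg br phi H;
         Fa = {rpow phi S \<alpha> n | n. True};
         Fb = {rpow phi S \<beta> m | m. True} \<union> {(\<lambda>x. - rpow phi S \<beta> m x) | m. True}
     in \<exists>as. length as \<ge> 1 \<and> set as \<subseteq> \<Lambda> \<and>
        (if length as = 1 then as ! 0 \<in> Fa \<inter> Fb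
         else as ! 0 \<in> Fa \<and>
              (\<forall>i\<in>{1..length as - 2}. conn_sum phi S as i \<in> \<Lambda>) \<and>
              conn_sum phi S as (length as - 1) \<in> Fb))"

definition root_class where
  "root_class sc Lg br phi H \<alpha> = {\<beta> \<in> roots sc Lg br phi H. connected sc Lg br phi H \<beta> \<alpha>}"

definition H_part where
  "H_part sc Lg br phi H C = module.span sc
     {br x y | x y \<beta>. \<beta> \<in> C \<and> x \<in> root_space sc Lg br phi H \<beta> \<and>
                     y \<in> root_space sc Lg br phi H (\<lambda>h. - \<beta> h)}"

definition V_part where
  "V_part sc Lg br phi H C = module.span sc (\<Union>\<beta>\<in>C. root_space sc Lg br phi H \<beta>)"

definition L_part where
  "L_part sc Lg br phi H C = {h + v | h v. h \<in> H_part sc Lg br phi H C \<and> v \<in> V_part sc Lg br phi H C}"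

end

theory Submission
  imports Defs
begin


lemma sum_if_restrict: "finite B \<Longrightarrow> F \<subseteq> B \<Longrightarrow> sum (\<lambda>i. if i \<in> F then a i else (0::'a::comm_monoid_add)) B = sum a F"
  using sum.inter_restrict[of B a F, symmetric] by (simp add: Int_absorb1)

context vector_space begin

lemma span_UN_sum:
  assumes sub: "\<forall>i\<in>A. subspace (V i)"
  shows "x \<in> span (\<Union>i\<in>A. V i) \<longleftrightarrow>
    (\<exists>F a. finite F \<and> F \<subseteq> A \<and> (\<forall>i\<in>F. a i \<in> V i) \<and> x = sum a F)"
proof
  define P where "P x = (\<exists>F a. finite F \<and> F \<subseteq> A \<and> (\<forall>i\<in>F. a i \<in> V i) \<and> x = sum a F)" for x
  assume x: "x \<in> span (\<Union>i\<in>A. V i)"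
  have "subspace (Collect P)" unfolding subspace_def
  proof (intro conjI allI impI ballI)
    show "0 \<in> Collect P" unfolding P_def by (auto intro!: exI[of _ "{}"])
  next
    fix x y assume "x \<in> Collect P" "y \<in> Collect P"
    then obtain F a G b where F: "finite F" "F \<subseteq> A" "\<forall>i\<in>F. a i \<in> V i" "x = sum a F"
      and G: "finite G" "G \<subseteq> A" "\<forall>i\<in>G. b i \<in> V i" "y = sum b G" unfolding P_def by auto
    define c where "c i = (if i \<in> F then a i else 0) + (if i \<in> G then b i else 0)" for i
    have "sum c (F \<union> G) = sum (\<lambda>i. if i \<in> F then a i else 0) (F \<union> G) + sum (\<lambda>i. if i \<in> G then b i else 0) (F \<union> G)"
      unfolding c_def by (simp add: sum.distrib)
    also have "\<dots> = sum a F + sum b G"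
      using F(1) G(1) by (simp add: sum_if_restrict)
    finally have "x + y = sum c (F \<union> G)" using F G by simp
    moreover have "\<forall>i\<in>F \<union> G. c i \<in> V i"
    proof
      fix i assume i: "i \<in> F \<union> G"
      then have si: "subspace (V i)" using sub F G by auto
      have "(if i \<in> F then a i else 0) \<in> V i" using F si subspace_0 by auto
      moreover have "(if i \<in> G then b i else 0) \<in> V i" using G si subspace_0 by auto
      ultimately show "c i \<in> V i" unfolding c_def using si subspace_add by blast
    qed
    ultimately show "x + y \<in> Collect P" using F G unfolding P_def by (auto intro!: exI[of _ "F \<union> G"])
  next
    fix c x assume "x \<in> Collect P"
    then obtain F a where F: "finite F" "F \<subseteq> A" "\<forall>i\<in>F. a i \<in> V i" "x = sum a F" unfolding P_def by auto
    have "\<forall>i\<in>F. c *s a i \<in> V i" using F sub subspace_scale by blast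
    then show "c *s x \<in> Collect P" unfolding P_def
      using F by (auto intro!: exI[of _ F] exI[of _ "\<lambda>i. c *s a i"] simp: scale_sum_right)
  qed
  moreover have "\<And>y. y \<in> (\<Union>i\<in>A. V i) \<Longrightarrow> P y"
  proof -
    fix y assume "y \<in> (\<Union>i\<in>A. V i)"
    then obtain i where i: "i \<in> A" "y \<in> V i" by auto
    show "P y" unfolding P_def by (rule exI[of _ "{i}"], rule exI[of _ "\<lambda>_. y"]) (use i in auto)
  qed
  ultimately have "P x" using span_induct[OF x, of P] by blast
  then show "\<exists>F a. finite F \<and> F \<subseteq> A \<and> (\<forall>i\<in>F. a i \<in> V i) \<and> x = sum a F" unfolding P_def .
next
  assume "\<exists>F a. finite F \<and> F \<subseteq> A \<and> (\<forall>i\<in>F. a i \<in> V i) \<and> x = sum a F"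
  then obtain F a where F: "finite F" "F \<subseteq> A" "\<forall>i\<in>F. a i \<in> V i" "x = sum a F" by auto
  show "x \<in> span (\<Union>i\<in>A. V i)" unfolding F(4)
    by (rule span_sum) (use F in \<open>auto intro: span_base\<close>)
qed


lemma indep_disjoint:
  assumes sub: "\<forall>i\<in>J. subspace (V i)"
    and ind: "\<forall>F v. finite F \<and> F \<subseteq> J \<and> (\<forall>i\<in>F. v i \<in> V i) \<and> sum v F = 0 \<longrightarrow> (\<forall>i\<in>F. v i = 0)"
    and AB: "A \<subseteq> J" "B \<subseteq> J" "A \<inter> B = {}"
    and x: "x \<in> span (\<Union>i\<in>A. V i)" "x \<in> span (\<Union>i\<in>B. V i)"
  shows "x = 0"
proof -
  have subA: "\<forall>i\<in>A. subspace (V i)" and subB: "\<forall>i\<in>B. subspace (V i)" using sub AB by auto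
  from x(1)[unfolded span_UN_sum[OF subA]]
  obtain F a where F: "finite F" "F \<subseteq> A" "\<forall>i\<in>F. a i \<in> V i" "x = sum a F"
    by blast
  from x(2)[unfolded span_UN_sum[OF subB]]
  obtain G b where G: "finite G" "G \<subseteq> B" "\<forall>i\<in>G. b i \<in> V i" "x = sum b G"
    by blast
  define c where "c i = (if i \<in> F then a i else 0) - (if i \<in> G then b i else 0)" for i
  have "sum c (F \<union> G) = sum (\<lambda>i. if i \<in> F then a i else 0) (F \<union> G) - sum (\<lambda>i. if i \<in> G then b i else 0) (F \<union> G)"
    unfolding c_def by (simp add: sum_subtractf)
  also have "\<dots> = sum a F - sum b G"
    using F(1) G(1) by (simp add: sum_if_restrict)
  finally have s0: "sum c (F \<union> G) = 0" using F G by simp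
  have FG: "F \<inter> G = {}" using F G AB by auto
  have "\<forall>i\<in>F \<union> G. c i \<in> V i"
  proof
    fix i assume i: "i \<in> F \<union> G"
    then have si: "subspace (V i)" using sub F G AB by auto
    have "(if i \<in> F then a i else 0) \<in> V i" using F si subspace_0 by auto
    moreover have "(if i \<in> G then b i else 0) \<in> V i" using G si subspace_0 by auto
    ultimately show "c i \<in> V i" unfolding c_def using si subspace_diff by blast
  qed
  moreover have "finite (F \<union> G)" "F \<union> G \<subseteq> J" using F G AB by auto
  ultimately have c0: "\<forall>i\<in>F \<union> G. c i = 0" using s0 spec[OF spec[OF ind, of "F \<union> G"], of c] by blast
  have "\<forall>i\<in>F. a i = 0"
  proof
    fix i assume i: "i \<in> F"
    with FG have "i \<notin> G" by auto
    from c0 i have "c i = 0" by blast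
    with i \<open>i \<notin> G\<close> show "a i = 0" by (simp add: c_def)
  qed
  then show ?thesis using F by simp
qed

lemma indep_component:
  assumes sub: "\<forall>i\<in>J. subspace (V i)"
    and ind: "\<forall>F v. finite F \<and> F \<subseteq> J \<and> (\<forall>i\<in>F. v i \<in> V i) \<and> sum v F = 0 \<longrightarrow> (\<forall>i\<in>F. v i = 0)"
    and F: "finite F" "F \<subseteq> J" "\<forall>i\<in>F. a i \<in> V i" and j: "j \<in> J" "sum a F \<in> V j"
  shows "\<forall>i\<in>F - {j}. a i = 0"
proof -
  define c where "c i = (if i \<in> F then a i else 0) - (if i = j then sum a F else 0)" for i
  have "sum c (insert j F) = sum (\<lambda>i. if i \<in> F then a i else 0) (insert j F) - sum (\<lambda>i. if i = j then sum a F else 0) (insert j F)"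
    unfolding c_def by (simp add: sum_subtractf)
  also have "\<dots> = sum a F - sum a F"
    using sum_if_restrict[of "insert j F" F a, OF _ subset_insertI] F(1) by (simp add: sum.delta)
  finally have s0: "sum c (insert j F) = 0" by simp
  have "\<forall>i\<in>insert j F. c i \<in> V i"
  proof
    fix i assume i: "i \<in> insert j F"
    then have si: "subspace (V i)" using sub F j by auto
    have "(if i \<in> F then a i else 0) \<in> V i" using F si subspace_0 by auto
    moreover have "(if i = j then sum a F else 0) \<in> V i" using j si subspace_0 by auto
    ultimately show "c i \<in> V i" unfolding c_def using si subspace_diff by blast
  qed
  moreover have "finite (insert j F)" "insert j F \<subseteq> J" using F j by auto
  ultimately have "\<forall>i\<in>insert j F. c i = 0" using s0 spec[OF spec[OF ind, of "insert j F"], of c] by blast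
  then show ?thesis unfolding c_def by auto
qed

end



locale setting = vector_space sc for sc :: "'k::field \<Rightarrow> 'v::ab_group_add \<Rightarrow> 'v" +
  fixes Lg :: "'g::ab_group_add \<Rightarrow> 'v set" and br :: "'v \<Rightarrow> 'v \<Rightarrow> 'v"
    and phi :: "'v \<Rightarrow> 'v" and eps :: "'g \<Rightarrow> 'g \<Rightarrow> 'k" and H :: "'v set"
  assumes reg: "regular_hlca sc Lg br phi eps"
    and mab: "max_abelian_subalgebra sc Lg br phi H"
    and spl: "split_wrt sc Lg br phi H"
    and symr: "symmetric_roots sc Lg br phi H"
    and ann: "annihilator br = {0}"
    and der: "derived sc br = UNIV"
begin

lemma hlca: "hom_lie_color_algebra sc Lg br phi eps" using reg unfolding regular_hlca_def by blast
lemma bij_phi: "bij phi" using reg unfolding regular_hlca_def by blast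

lemma Lg_ids: "internal_direct_sum sc UNIV Lg UNIV" using hlca unfolding hom_lie_color_algebra_def by (elim conjE) assumption
lemma Lg_sub': "\<forall>i\<in>UNIV. subspace (Lg i)" using Lg_ids unfolding internal_direct_sum_def by (elim conjE) assumption
lemma Lg_sub: "subspace (Lg g)" using Lg_sub' by simp
lemma Lg_ind: "\<forall>F v. finite F \<and> F \<subseteq> UNIV \<and> (\<forall>i\<in>F. v i \<in> Lg i) \<and> sum v F = 0 \<longrightarrow> (\<forall>i\<in>F. v i = 0)"
  using Lg_ids unfolding internal_direct_sum_def by (elim conjE) assumption
lemma Lg_span: "span (\<Union>g. Lg g) = UNIV" using Lg_ids unfolding internal_direct_sum_def by (elim conjE) (rule sym)

lemma bichar: "bicharacter eps" using hlca unfolding hom_lie_color_algebra_def by (elim conjE) assumption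
lemma eps_nz: "eps a b \<noteq> 0" using bichar unfolding bicharacter_def by (elim conjE) simp
lemma eps_inv: "eps a b * eps b a = 1" using bichar unfolding bicharacter_def by (elim conjE) simp
lemma eps_0l: "eps 0 c = 1"
proof -
  have h: "\<forall>a b c. eps (a + b) c = eps a c * eps b c" using bichar unfolding bicharacter_def by (elim conjE) assumption
  have "eps (0 + 0) c = eps 0 c * eps 0 c" using h by blast
  then have "eps 0 c * 1 = eps 0 c * eps 0 c" by simp
  then show ?thesis using eps_nz[of 0 c] mult_left_cancel[of "eps 0 c" 1 "eps 0 c"] by simp
qed
lemma eps_0r: "eps c 0 = 1"
proof -
  have h: "\<forall>a b c. eps a (b + c) = eps a b * eps a c" using bichar unfolding bicharacter_def by (elim conjE) assumption
  have "eps c (0 + 0) = eps c 0 * eps c 0" using h by blast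
  then have "eps c 0 * 1 = eps c 0 * eps c 0" by simp
  then show ?thesis using eps_nz[of c 0] mult_left_cancel[of "eps c 0" 1 "eps c 0"] by simp
qed

lemma lin_br2: "Vector_Spaces.linear sc sc (br x)"
proof -
  have "\<forall>x. Vector_Spaces.linear sc sc (br x)" using hlca unfolding hom_lie_color_algebra_def by (elim conjE) assumption
  then show ?thesis by blast
qed
lemma lin_br1: "Vector_Spaces.linear sc sc (\<lambda>x. br x z)"
proof -
  have "\<forall>y. Vector_Spaces.linear sc sc (\<lambda>x. br x y)" using hlca unfolding hom_lie_color_algebra_def by (elim conjE) assumption
  then show ?thesis by blast
qed
lemma lin_phi: "Vector_Spaces.linear sc sc phi"
  using hlca unfolding hom_lie_color_algebra_def by (elim conjE) assumption
lemma br_lin2: "br x (y + z) = br x y + br x z" using lin_br2[of x] unfolding Vector_Spaces.linear_iff by blast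
lemma br_scale2: "br x (sc c y) = sc c (br x y)" using lin_br2[of x] unfolding Vector_Spaces.linear_iff by blast
lemma br_lin1: "br (x + y) z = br x z + br y z" using lin_br1[of z] unfolding Vector_Spaces.linear_iff by blast
lemma br_scale1: "br (sc c x) z = sc c (br x z)" using lin_br1[of z] unfolding Vector_Spaces.linear_iff by blast
lemma phi_add: "phi (x + y) = phi x + phi y" using lin_phi unfolding Vector_Spaces.linear_iff by blast
lemma phi_scale: "phi (sc c x) = sc c (phi x)" using lin_phi unfolding Vector_Spaces.linear_iff by blast
lemma phi_grad: "x \<in> Lg g \<Longrightarrow> phi x \<in> Lg g"
proof -
  have "\<forall>g. phi ` Lg g \<subseteq> Lg g" using hlca unfolding hom_lie_color_algebra_def by (elim conjE) assumption
  then show "x \<in> Lg g \<Longrightarrow> phi x \<in> Lg g" by blast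
qed
lemma phi_br: "phi (br x y) = br (phi x) (phi y)"
proof -
  have "\<forall>x y. phi (br x y) = br (phi x) (phi y)" using hlca unfolding hom_lie_color_algebra_def by (elim conjE) assumption
  then show ?thesis by blast
qed
lemma br_grad: "x \<in> Lg a \<Longrightarrow> y \<in> Lg b \<Longrightarrow> br x y \<in> Lg (a + b)"
proof -
  have "\<forall>g h. \<forall>x\<in>Lg g. \<forall>y\<in>Lg h. br x y \<in> Lg (g + h)" using hlca unfolding hom_lie_color_algebra_def by (elim conjE) assumption
  then show "x \<in> Lg a \<Longrightarrow> y \<in> Lg b \<Longrightarrow> br x y \<in> Lg (a + b)" by blast
qed
lemma skew: "x \<in> Lg a \<Longrightarrow> y \<in> Lg b \<Longrightarrow> br x y = - (sc (eps a b) (br y x))"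
proof -
  have "\<forall>a b. \<forall>x\<in>Lg a. \<forall>y\<in>Lg b. br x y = - sc (eps a b) (br y x)" using hlca unfolding hom_lie_color_algebra_def by (elim conjE) assumption
  then show "x \<in> Lg a \<Longrightarrow> y \<in> Lg b \<Longrightarrow> br x y = - (sc (eps a b) (br y x))" by blast
qed
lemma jacobi: "x \<in> Lg a \<Longrightarrow> y \<in> Lg b \<Longrightarrow> z \<in> Lg c \<Longrightarrow>
   sc (eps c a) (br (phi x) (br y z)) + sc (eps a b) (br (phi y) (br z x)) + sc (eps b c) (br (phi z) (br x y)) = 0"
proof -
  have "\<forall>a b c. \<forall>x\<in>Lg a. \<forall>y\<in>Lg b. \<forall>z\<in>Lg c.
        sc (eps c a) (br (phi x) (br y z)) + sc (eps a b) (br (phi y) (br z x))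
        + sc (eps b c) (br (phi z) (br x y)) = 0" using hlca unfolding hom_lie_color_algebra_def by (elim conjE) assumption
  then show "x \<in> Lg a \<Longrightarrow> y \<in> Lg b \<Longrightarrow> z \<in> Lg c \<Longrightarrow>
   sc (eps c a) (br (phi x) (br y z)) + sc (eps a b) (br (phi y) (br z x)) + sc (eps b c) (br (phi z) (br x y)) = 0" by blast
qed

lemma br_zero1[simp]: "br 0 y = 0" using br_lin1[of 0 0 y] by simp
lemma br_zero2[simp]: "br x 0 = 0" using br_lin2[of x 0 0] by simp
lemma phi_zero[simp]: "phi 0 = 0" using phi_add[of 0 0] by simp
lemma br_neg1: "br (- x) y = - br x y" using br_lin1[of "- x" x y] by (simp add: eq_neg_iff_add_eq_0)
lemma br_neg2: "br x (- y) = - br x y" using br_lin2[of x "- y" y] by (simp add: eq_neg_iff_add_eq_0)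
lemma phi_neg: "phi (- x) = - phi x" using phi_add[of "- x" x] by (simp add: eq_neg_iff_add_eq_0)
lemma br_diff1: "br (x - y) z = br x z - br y z" using br_lin1[of x "- y" z] br_neg1 by simp
lemma br_diff2: "br z (x - y) = br z x - br z y" using br_lin2[of z x "- y"] br_neg2 by simp
lemma phi_diff: "phi (x - y) = phi x - phi y" using phi_add[of x "- y"] phi_neg by simp
lemma br_sum1: "br (sum f A) y = (\<Sum>i\<in>A. br (f i) y)"
  by (induct A rule: infinite_finite_induct) (auto simp: br_lin1)
lemma br_sum2: "br y (sum f A) = (\<Sum>i\<in>A. br y (f i))"
  by (induct A rule: infinite_finite_induct) (auto simp: br_lin2)
lemma phi_sum: "phi (sum f A) = (\<Sum>i\<in>A. phi (f i))"
  by (induct A rule: infinite_finite_induct) (auto simp: phi_add)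

lemma phi_inj: "phi x = phi y \<Longrightarrow> x = y" using bij_phi unfolding bij_def inj_def by blast

definition pinv where "pinv = inv phi"
lemma phi_pinv[simp]: "phi (pinv x) = x" unfolding pinv_def using bij_phi bij_inv_eq_iff by metis
lemma pinv_phi[simp]: "pinv (phi x) = x" unfolding pinv_def using bij_phi bij_inv_eq_iff by metis
lemma pinv_add: "pinv (x + y) = pinv x + pinv y" by (rule phi_inj) (simp add: phi_add)
lemma pinv_scale: "pinv (sc c x) = sc c (pinv x)" by (rule phi_inj) (simp add: phi_scale)
lemma pinv_zero[simp]: "pinv 0 = 0" by (rule phi_inj) simp
lemma phi_eq0: "phi x = 0 \<longleftrightarrow> x = 0" using phi_inj[of x 0] by auto

lemma pinv_grad: assumes w: "w \<in> Lg g" shows "pinv w \<in> Lg g"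
proof -
  have "pinv w \<in> span (\<Union>g. Lg g)" using Lg_span by simp
  from this[unfolded span_UN_sum[OF Lg_sub']]
  obtain F a where F: "finite F" "\<forall>i\<in>F. a i \<in> Lg i" "pinv w = sum a F" by blast
  have "w = sum (\<lambda>i. phi (a i)) F" using F(3) by (metis phi_pinv phi_sum)
  then have "sum (\<lambda>i. phi (a i)) F \<in> Lg g" using w by simp
  then have z: "\<forall>i\<in>F - {g}. phi (a i) = 0"
    using indep_component[OF Lg_sub' Lg_ind, of F "\<lambda>i. phi (a i)" g] F phi_grad by blast
  have "\<forall>i\<in>F. a i \<in> Lg g"
  proof
    fix i assume i: "i \<in> F"
    show "a i \<in> Lg g"
    proof (cases "i = g")
      case True then show ?thesis using F i by auto
    next
      case False then have "a i = 0" using z i phi_eq0 by blast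
      then show ?thesis using subspace_0[OF Lg_sub] by simp
    qed
  qed
  then show ?thesis using F(3) subspace_sum[OF Lg_sub] by metis
qed

end



context setting begin

abbreviation "S \<equiv> H0 Lg H"
abbreviation "RS \<equiv> root_space sc Lg br phi H"
abbreviation "Lam \<equiv> roots sc Lg br phi H"
abbreviation "D \<equiv> dual_H0 sc S"
abbreviation "rp \<equiv> rpow phi S"

lemma mab_parts1: "subspace H"
  using mab unfolding max_abelian_subalgebra_def abelian_subalgebra_def subalgebra_def graded_subspace_def
  by (elim conjE) assumption
lemma mab_parts2: "\<forall>x\<in>H. \<forall>y\<in>H. br x y = 0"
  using mab unfolding max_abelian_subalgebra_def abelian_subalgebra_def subalgebra_def graded_subspace_def
  by (elim conjE) assumption
lemma mab_parts3: "phi ` H = H"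
  using mab unfolding max_abelian_subalgebra_def abelian_subalgebra_def subalgebra_def graded_subspace_def
  by (elim conjE) assumption
lemmas mab_parts = mab_parts1 mab_parts2 mab_parts3
lemma H_sub: "subspace H" using mab_parts by blast
lemma H_ab: "x \<in> H \<Longrightarrow> y \<in> H \<Longrightarrow> br x y = 0" using mab_parts by blast
lemma phi_H: "x \<in> H \<Longrightarrow> phi x \<in> H" using mab_parts by blast
lemma pinv_H: "x \<in> H \<Longrightarrow> pinv x \<in> H"
proof -
  assume "x \<in> H"
  then obtain h where "h \<in> H" "x = phi h" using mab_parts(3) by (metis imageE)
  then show ?thesis by simp
qed

lemma S_def': "S = H \<inter> Lg 0" unfolding H0_def by simp
lemma S_sub: "subspace S" unfolding S_def' by (rule subspace_inter[OF H_sub Lg_sub])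
lemma phi_S: "x \<in> S \<Longrightarrow> phi x \<in> S" unfolding S_def' using phi_H phi_grad by blast
lemma pinv_S: "x \<in> S \<Longrightarrow> pinv x \<in> S" unfolding S_def' using pinv_H pinv_grad by blast
lemma S_H: "x \<in> S \<Longrightarrow> x \<in> H" unfolding S_def' by blast
lemma S_L0: "x \<in> S \<Longrightarrow> x \<in> Lg 0" unfolding S_def' by blast

lemma pinvpow_S: "x \<in> S \<Longrightarrow> (pinv ^^ n) x \<in> S"
  by (induct n) (auto simp: pinv_S)
lemma pinvpow_add: "(pinv ^^ n) (x + y) = (pinv ^^ n) x + (pinv ^^ n) y"
  by (induct n) (auto simp: pinv_add)
lemma pinvpow_scale: "(pinv ^^ n) (sc c x) = sc c ((pinv ^^ n) x)"
  by (induct n) (auto simp: pinv_scale)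

lemma inv_into_S: "y \<in> S \<Longrightarrow> inv_into S phi y = pinv y"
proof -
  assume y: "y \<in> S"
  have "inj_on phi S" using bij_phi by (metis bij_betw_def inj_on_subset subset_UNIV)
  then show ?thesis using inv_into_f_eq[of phi S "pinv y" y] pinv_S[OF y] by simp
qed

lemma invpow_S: "x \<in> S \<Longrightarrow> (inv_into S phi ^^ n) x = (pinv ^^ n) x"
proof (induct n)
  case 0 then show ?case by simp
next
  case (Suc n)
  then show ?case using inv_into_S[OF pinvpow_S[OF Suc(2), of n]] by simp
qed

lemma rp_eq: "rp \<alpha> n = (\<lambda>x. if x \<in> S then \<alpha> ((pinv ^^ n) x) else 0)"
  unfolding rpow_def by (rule ext) (simp add: invpow_S)

lemma rp_rp: "rp (rp \<alpha> n) m = rp \<alpha> (n + m)"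
  unfolding rp_eq by (rule ext) (simp add: pinvpow_S funpow_add)

lemma D_out: "\<alpha> \<in> D \<Longrightarrow> x \<notin> S \<Longrightarrow> \<alpha> x = 0" unfolding dual_H0_def by blast
lemma D_add: "\<alpha> \<in> D \<Longrightarrow> x \<in> S \<Longrightarrow> y \<in> S \<Longrightarrow> \<alpha> (x + y) = \<alpha> x + \<alpha> y" unfolding dual_H0_def by blast
lemma D_scale: "\<alpha> \<in> D \<Longrightarrow> x \<in> S \<Longrightarrow> \<alpha> (sc c x) = c * \<alpha> x" unfolding dual_H0_def by blast
lemma D_I: "(\<And>x y. x \<in> S \<Longrightarrow> y \<in> S \<Longrightarrow> \<alpha> (x + y) = \<alpha> x + \<alpha> y) \<Longrightarrow>
   (\<And>c x. x \<in> S \<Longrightarrow> \<alpha> (sc c x) = c * \<alpha> x) \<Longrightarrow> (\<And>x. x \<notin> S \<Longrightarrow> \<alpha> x = 0) \<Longrightarrow> \<alpha> \<in> D"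
  unfolding dual_H0_def by blast

lemma rp_0: "\<alpha> \<in> D \<Longrightarrow> rp \<alpha> 0 = \<alpha>"
  unfolding rp_eq by (rule ext) (simp add: D_out)

lemma rp_add: "rp (\<lambda>x. \<alpha> x + \<beta> x) n = (\<lambda>x. rp \<alpha> n x + rp \<beta> n x)"
  unfolding rp_eq by (rule ext) simp
lemma rp_neg: "rp (\<lambda>x. - \<alpha> x) n = (\<lambda>x. - rp \<alpha> n x)"
  unfolding rp_eq by (rule ext) simp
lemma rp_sum: "rp (\<lambda>x. \<Sum>j\<in>A. f j x) n = (\<lambda>x. \<Sum>j\<in>A. rp (f j) n x)"
  unfolding rp_eq by (rule ext) simp

lemma S_add: "x \<in> S \<Longrightarrow> y \<in> S \<Longrightarrow> x + y \<in> S" using S_sub subspace_add by blast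
lemma S_scale: "x \<in> S \<Longrightarrow> sc c x \<in> S" using S_sub subspace_scale by blast

lemma rp_D: "\<alpha> \<in> D \<Longrightarrow> rp \<alpha> n \<in> D"
  unfolding rp_eq
  by (rule D_I) (auto simp: pinvpow_add pinvpow_scale pinvpow_S S_add S_scale D_add D_scale)

lemma D_addf: "\<alpha> \<in> D \<Longrightarrow> \<beta> \<in> D \<Longrightarrow> (\<lambda>x. \<alpha> x + \<beta> x) \<in> D"
  by (rule D_I) (auto simp: D_add D_scale D_out distrib_left)
lemma D_negf: "\<alpha> \<in> D \<Longrightarrow> (\<lambda>x. - \<alpha> x) \<in> D"
  by (rule D_I) (auto simp: D_add D_scale D_out)

definition up where "up \<alpha> = (\<lambda>x. if x \<in> S then \<alpha> (phi x) else 0)"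

lemma up_D: "\<alpha> \<in> D \<Longrightarrow> up \<alpha> \<in> D"
  unfolding up_def
  by (rule D_I) (auto simp: phi_add phi_scale phi_S S_add S_scale D_add D_scale)

lemma rp_up: "\<alpha> \<in> D \<Longrightarrow> rp (up \<alpha>) 1 = \<alpha>"
  unfolding rp_eq up_def by (rule ext) (auto simp: pinv_S D_out)
lemma up_rp: "\<alpha> \<in> D \<Longrightarrow> up (rp \<alpha> 1) = \<alpha>"
  unfolding rp_eq up_def by (rule ext) (auto simp: phi_S D_out)

lemma rp_Suc: "rp \<alpha> (Suc n) = rp (rp \<alpha> n) 1"
  using rp_rp[of \<alpha> n 1] by simp

lemma RS_sub: "subspace (RS \<alpha>)"
  unfolding subspace_def root_space_def
  by (auto simp: br_lin2 br_scale2 phi_add phi_scale scale_right_distrib scale_left_commute)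

lemma RS_cong: "(\<And>x. x \<in> S \<Longrightarrow> \<alpha> x = \<beta> x) \<Longrightarrow> RS \<alpha> = RS \<beta>"
  unfolding root_space_def by auto

lemma RS_D: "v \<in> RS \<alpha> \<Longrightarrow> h \<in> S \<Longrightarrow> br h v = sc (\<alpha> h) (phi v)"
  unfolding root_space_def by blast
lemma RS_I: "(\<And>h. h \<in> S \<Longrightarrow> br h v = sc (\<alpha> h) (phi v)) \<Longrightarrow> v \<in> RS \<alpha>"
  unfolding root_space_def by blast

lemma phi_RS: "v \<in> RS \<alpha> \<Longrightarrow> phi v \<in> RS (rp \<alpha> 1)"
proof (rule RS_I)
  fix h assume v: "v \<in> RS \<alpha>" and h: "h \<in> S"
  have "br h (phi v) = phi (br (pinv h) v)" by (simp add: phi_br)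
  also have "\<dots> = phi (sc (\<alpha> (pinv h)) (phi v))" using RS_D[OF v pinv_S[OF h]] by simp
  also have "\<dots> = sc (rp \<alpha> 1 h) (phi (phi v))" using h by (simp add: phi_scale rp_eq)
  finally show "br h (phi v) = sc (rp \<alpha> 1 h) (phi (phi v))" .
qed

lemma pinv_RS: "v \<in> RS \<alpha> \<Longrightarrow> pinv v \<in> RS (up \<alpha>)"
proof (rule RS_I)
  fix h assume v: "v \<in> RS \<alpha>" and h: "h \<in> S"
  have "phi (br h (pinv v)) = br (phi h) v" by (simp add: phi_br)
  also have "\<dots> = sc (\<alpha> (phi h)) (phi v)" using RS_D[OF v phi_S[OF h]] by simp
  also have "\<dots> = phi (sc (up \<alpha> h) (phi (pinv v)))" using h by (simp add: phi_scale up_def)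
  finally show "br h (pinv v) = sc (up \<alpha> h) (phi (pinv v))" by (rule phi_inj)
qed

lemma Lam_D: "\<alpha> \<in> Lam \<Longrightarrow> \<alpha> \<in> D" unfolding roots_def by blast
lemma Lam_nz: "\<alpha> \<in> Lam \<Longrightarrow> \<exists>x\<in>S. \<alpha> x \<noteq> 0"
proof -
  assume a: "\<alpha> \<in> Lam"
  then have "\<alpha> \<noteq> (\<lambda>_. 0)" unfolding roots_def by blast
  then obtain x where "\<alpha> x \<noteq> 0" by auto
  then show ?thesis using D_out[OF Lam_D[OF a]] by blast
qed
lemma Lam_RS: "\<alpha> \<in> Lam \<Longrightarrow> \<exists>v\<in>RS \<alpha>. v \<noteq> 0"
proof -
  assume a: "\<alpha> \<in> Lam"
  then have "RS \<alpha> \<noteq> {0}" unfolding roots_def by blast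
  moreover have "0 \<in> RS \<alpha>" using RS_sub subspace_0 by blast
  ultimately show ?thesis by blast
qed
lemma Lam_I: "\<alpha> \<in> D \<Longrightarrow> x \<in> S \<Longrightarrow> \<alpha> x \<noteq> 0 \<Longrightarrow> v \<in> RS \<alpha> \<Longrightarrow> v \<noteq> 0 \<Longrightarrow> \<alpha> \<in> Lam"
  unfolding roots_def by auto

lemma rp1_Lam: "\<alpha> \<in> Lam \<Longrightarrow> rp \<alpha> 1 \<in> Lam"
proof -
  assume a: "\<alpha> \<in> Lam"
  obtain x where x: "x \<in> S" "\<alpha> x \<noteq> 0" using Lam_nz[OF a] by blast
  obtain v where v: "v \<in> RS \<alpha>" "v \<noteq> 0" using Lam_RS[OF a] by blast
  have "rp \<alpha> 1 (phi x) = \<alpha> x" using x phi_S by (simp add: rp_eq)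
  then show ?thesis
    using Lam_I[OF rp_D[OF Lam_D[OF a]] phi_S[OF x(1)] _ phi_RS[OF v(1)]] x v phi_eq0 by auto
qed

lemma rp_Lam: "\<alpha> \<in> Lam \<Longrightarrow> rp \<alpha> n \<in> Lam"
proof (induct n)
  case 0 then show ?case using rp_0 Lam_D by simp
next
  case (Suc n) then have "rp \<alpha> n \<in> Lam" by blast
  then show ?case by (subst rp_Suc) (rule rp1_Lam)
qed

lemma up_Lam: "\<alpha> \<in> Lam \<Longrightarrow> up \<alpha> \<in> Lam"
proof -
  assume a: "\<alpha> \<in> Lam"
  obtain x where x: "x \<in> S" "\<alpha> x \<noteq> 0" using Lam_nz[OF a] by blast
  obtain v where v: "v \<in> RS \<alpha>" "v \<noteq> 0" using Lam_RS[OF a] by blast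
  have "up \<alpha> (pinv x) = \<alpha> x" using x pinv_S by (simp add: up_def)
  moreover have "pinv v \<noteq> 0" using v by (metis phi_pinv phi_zero)
  ultimately show ?thesis
    using Lam_I[OF up_D[OF Lam_D[OF a]] pinv_S[OF x(1)] _ pinv_RS[OF v(1)]] x by auto
qed

lemma neg_Lam: "\<alpha> \<in> Lam \<Longrightarrow> (\<lambda>x. - \<alpha> x) \<in> Lam"
  using symr unfolding symmetric_roots_def by blast

lemma Lam_zero: "(\<lambda>_. 0) \<notin> Lam" unfolding roots_def by blast

definition J where "J = insert None (Some ` Lam)"
definition W where "W i = (case i of None \<Rightarrow> H | Some \<alpha> \<Rightarrow> RS \<alpha>)"

lemma spl_parts1: "\<forall>i\<in>J. subspace (W i)"
  using spl unfolding split_wrt_def internal_direct_sum_def J_def W_def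
  by (elim conjE) assumption
lemma spl_parts2: "\<forall>F v. finite F \<and> F \<subseteq> J \<and> (\<forall>i\<in>F. v i \<in> W i) \<and> sum v F = 0 \<longrightarrow> (\<forall>i\<in>F. v i = 0)"
  using spl unfolding split_wrt_def internal_direct_sum_def J_def W_def
  by (elim conjE) assumption
lemma spl_parts3: "UNIV = span (\<Union>i\<in>J. W i)"
  using spl unfolding split_wrt_def internal_direct_sum_def J_def W_def
  by (elim conjE) assumption
lemmas spl_parts = spl_parts1 spl_parts2 spl_parts3

lemma W_None[simp]: "W None = H" and W_Some[simp]: "W (Some \<alpha>) = RS \<alpha>" unfolding W_def by simp_all

lemma UN_J: "(\<Union>i\<in>J. W i) = H \<union> (\<Union>\<alpha>\<in>Lam. RS \<alpha>)" unfolding J_def by auto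

lemma span_all: "span (H \<union> (\<Union>\<alpha>\<in>Lam. RS \<alpha>)) = UNIV"
  using spl_parts(3) UN_J by simp

end



context setting begin

abbreviation "cs \<equiv> conn_sum phi S"
abbreviation "conn \<equiv> connected sc Lg br phi H"

lemma cs_0: "as ! 0 \<in> D \<Longrightarrow> cs as 0 = as ! 0"
  unfolding conn_sum_def by (simp add: rp_0)

lemma rp_pinv: "x \<in> S \<Longrightarrow> rp f k (pinv x) = rp f (Suc k) x"
  unfolding rp_eq by (simp add: pinv_S funpow_swap1)

lemma cs_Suc: "cs as (Suc i) = rp (\<lambda>x. cs as i x + (as ! Suc i) x) 1"
proof (rule ext)
  fix x
  have B: "(\<Sum>j\<in>{2..Suc i + 1}. rp (as ! (j - 1)) (Suc i + 2 - j) x) =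
      (\<Sum>j\<in>{2..i+1}. rp (as ! (j - 1)) (Suc (i + 2 - j)) x) + rp (as ! Suc i) 1 x"
  proof -
    have "{2..Suc i + 1} = insert (Suc i + 1) {2..i+1}" by auto
    then have "(\<Sum>j\<in>{2..Suc i + 1}. rp (as ! (j - 1)) (Suc i + 2 - j) x) =
       rp (as ! Suc i) 1 x + (\<Sum>j\<in>{2..i+1}. rp (as ! (j - 1)) (Suc i + 2 - j) x)" by simp
    also have "(\<Sum>j\<in>{2..i+1}. rp (as ! (j - 1)) (Suc i + 2 - j) x) =
       (\<Sum>j\<in>{2..i+1}. rp (as ! (j - 1)) (Suc (i + 2 - j)) x)"
      by (rule sum.cong) (auto simp: Suc_diff_le)
    finally show ?thesis by (simp add: add.commute)
  qed
  show "cs as (Suc i) x = rp (\<lambda>x. cs as i x + (as ! Suc i) x) 1 x"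
  proof (cases "x \<in> S")
    case False
    then show ?thesis unfolding conn_sum_def rp_eq by simp
  next
    case True
    have R: "rp (\<lambda>x. cs as i x + (as ! Suc i) x) 1 x = cs as i (pinv x) + (as ! Suc i) (pinv x)"
      using True by (simp add: rp_eq)
    have "cs as i (pinv x) = rp (as ! 0) i (pinv x) + (\<Sum>j\<in>{2..i+1}. rp (as ! (j - 1)) (i + 2 - j) (pinv x))"
      by (simp only: conn_sum_def)
    also have "\<dots> = rp (as ! 0) (Suc i) x + (\<Sum>j\<in>{2..i+1}. rp (as ! (j - 1)) (Suc (i + 2 - j)) x)"
      by (simp only: rp_pinv[OF True])
    finally have C: "cs as i (pinv x) = rp (as ! 0) (Suc i) x + (\<Sum>j\<in>{2..i+1}. rp (as ! (j - 1)) (Suc (i + 2 - j)) x)" .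
    have E: "(as ! Suc i) (pinv x) = rp (as ! Suc i) 1 x" using True by (simp add: rp_eq)
    have "cs as (Suc i) x = rp (as ! 0) (Suc i) x + (\<Sum>j\<in>{2..Suc i + 1}. rp (as ! (j - 1)) (Suc i + 2 - j) x)"
      unfolding conn_sum_def by simp
    then show ?thesis using R C E B by (simp add: add.assoc)
  qed
qed

lemma cs_prefix: "i < length as \<Longrightarrow> cs (as @ xs) i = cs as i"
  unfolding conn_sum_def
  by (rule ext) (auto simp: nth_append intro!: sum.cong)

definition T where "T a b \<longleftrightarrow> a \<in> Lam \<and> b \<in> Lam \<and> (\<exists>r\<in>Lam. b = rp (\<lambda>x. a x + r x) 1)"

definition conn' where "conn' \<alpha> \<beta> \<longleftrightarrow>
  (\<exists>n m b. (b = rp \<beta> m \<or> b = (\<lambda>x. - rp \<beta> m x)) \<and> T\<^sup>*\<^sup>* (rp \<alpha> n) b)"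

lemma Fb_Lam: "\<beta> \<in> Lam \<Longrightarrow> (b = rp \<beta> m \<or> b = (\<lambda>x. - rp \<beta> m x)) \<Longrightarrow> b \<in> Lam"
  using rp_Lam neg_Lam by blast

lemma conn_imp: assumes a: "\<alpha> \<in> Lam" "\<beta> \<in> Lam" and c: "conn \<alpha> \<beta>" shows "conn' \<alpha> \<beta>"
proof -
  from c obtain as where as: "length as \<ge> 1" "set as \<subseteq> Lam"
    and rest: "if length as = 1 then as ! 0 \<in> {rp \<alpha> n | n. True} \<inter>
                 ({rp \<beta> m | m. True} \<union> {(\<lambda>x. - rp \<beta> m x) | m. True})
         else as ! 0 \<in> {rp \<alpha> n | n. True} \<and>
              (\<forall>i\<in>{1..length as - 2}. cs as i \<in> Lam) \<and>
              cs as (length as - 1) \<in> ({rp \<beta> m | m. True} \<union> {(\<lambda>x. - rp \<beta> m x) | m. True})"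
    unfolding connected_def Let_def by blast
  define k where "k = length as"
  have "as ! 0 \<in> set as" using as(1) by (cases as) auto
  then have a0: "as ! 0 \<in> Lam" using as(2) by blast
  have cs0: "cs as 0 = as ! 0" using cs_0 Lam_D[OF a0] by simp
  have F: "as ! 0 \<in> {rp \<alpha> n | n. True}"
    and L: "cs as (k - 1) \<in> ({rp \<beta> m | m. True} \<union> {(\<lambda>x. - rp \<beta> m x) | m. True})"
    and M: "\<forall>i\<in>{1..k - 2}. cs as i \<in> Lam"
    using rest cs0 unfolding k_def by (auto split: if_splits)
  obtain n where n: "as ! 0 = rp \<alpha> n" using F by blast
  obtain m b where b: "b = cs as (k - 1)" "b = rp \<beta> m \<or> b = (\<lambda>x. - rp \<beta> m x)" using L by blast
  have allL: "\<forall>i<k. cs as i \<in> Lam"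
  proof (intro allI impI)
    fix i assume i: "i < k"
    show "cs as i \<in> Lam"
    proof (cases "i = 0")
      case True then show ?thesis using a0 cs0 by simp
    next
      case False
      show ?thesis
      proof (cases "i = k - 1")
        case True then show ?thesis using b Fb_Lam[OF a(2)] by blast
      next
        case False
        then have "i \<in> {1..k - 2}" using \<open>i \<noteq> 0\<close> i by auto
        then show ?thesis using M by blast
      qed
    qed
  qed
  have "\<forall>i<k. T\<^sup>*\<^sup>* (cs as 0) (cs as i)"
  proof (intro allI impI)
    fix i assume "i < k"
    then show "T\<^sup>*\<^sup>* (cs as 0) (cs as i)"
    proof (induct i)
      case 0 then show ?case by simp
    next
      case (Suc i)
      then have IH: "T\<^sup>*\<^sup>* (cs as 0) (cs as i)" by simp
      have "as ! Suc i \<in> set as" using Suc(2) unfolding k_def by (intro nth_mem) simp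
      then have "as ! Suc i \<in> Lam" using as(2) by blast
      moreover have "cs as i \<in> Lam" "cs as (Suc i) \<in> Lam" using allL Suc(2) by auto
      ultimately have "T (cs as i) (cs as (Suc i))" unfolding T_def by (auto simp: cs_Suc)
      with IH show ?case by (meson rtranclp.rtrancl_into_rtrancl)
    qed
  qed
  then have "T\<^sup>*\<^sup>* (rp \<alpha> n) b" using as(1) b(1) cs0 n unfolding k_def by simp
  then show ?thesis unfolding conn'_def using b(2) by blast
qed

lemma path_list:
  assumes "T\<^sup>*\<^sup>* a b" "a \<in> Lam"
  shows "\<exists>as. length as \<ge> 1 \<and> set as \<subseteq> Lam \<and> as ! 0 = a \<and> (\<forall>i<length as. cs as i \<in> Lam)
           \<and> cs as (length as - 1) = b"
  using assms(1)
proof (induct rule: rtranclp_induct)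
  case base
  show ?case using assms(2) cs_0[of "[a]"] Lam_D by (intro exI[of _ "[a]"]) auto
next
  case (step b c)
  then obtain as where as: "length as \<ge> 1" "set as \<subseteq> Lam" "as ! 0 = a" "\<forall>i<length as. cs as i \<in> Lam"
    "cs as (length as - 1) = b" by blast
  from step(2) obtain r where r: "r \<in> Lam" "c = rp (\<lambda>x. b x + r x) 1" "c \<in> Lam" unfolding T_def by blast
  define bs where "bs = as @ [r]"
  have l: "length bs = Suc (length as)" unfolding bs_def by simp
  have pre: "\<forall>i<length as. cs bs i = cs as i" unfolding bs_def using cs_prefix by blast
  have "cs bs (length as) = c"
  proof -
    have "length as = Suc (length as - 1)" using as(1) by simp
    then have "cs bs (length as) = rp (\<lambda>x. cs bs (length as - 1) x + (bs ! (length as)) x) 1"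
      using cs_Suc by metis
    also have "\<dots> = c" using pre as(1,5) r(2) unfolding bs_def by simp
    finally show ?thesis .
  qed
  moreover have "\<forall>i<length bs. cs bs i \<in> Lam"
    using pre as(4) \<open>cs bs (length as) = c\<close> r(3) l less_Suc_eq by auto
  moreover have "bs ! 0 = a" using as(1,3) unfolding bs_def by (cases as) auto
  ultimately show ?case using l as r unfolding bs_def by (intro exI[of _ "as @ [r]"]) auto
qed

lemma imp_conn: assumes a: "\<alpha> \<in> Lam" "\<beta> \<in> Lam" and c: "conn' \<alpha> \<beta>" shows "conn \<alpha> \<beta>"
proof -
  from c obtain n m b where b: "b = rp \<beta> m \<or> b = (\<lambda>x. - rp \<beta> m x)" "T\<^sup>*\<^sup>* (rp \<alpha> n) b"
    unfolding conn'_def by blast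
  obtain as where as: "length as \<ge> 1" "set as \<subseteq> Lam" "as ! 0 = rp \<alpha> n" "\<forall>i<length as. cs as i \<in> Lam"
    "cs as (length as - 1) = b" using path_list[OF b(2) rp_Lam[OF a(1)]] by blast
  have bF: "b \<in> {rp \<beta> m | m. True} \<union> {(\<lambda>x. - rp \<beta> m x) | m. True}" using b(1) by blast
  have cs0: "cs as 0 = as ! 0" using cs_0 Lam_D as(3) rp_Lam[OF a(1)] by simp
  show ?thesis unfolding connected_def Let_def
  proof (intro exI[of _ as] conjI)
    show "1 \<le> length as" "set as \<subseteq> Lam" using as by auto
    show "if length as = 1 then as ! 0 \<in> {rp \<alpha> n | n. True} \<inter>
                 ({rp \<beta> m | m. True} \<union> {(\<lambda>x. - rp \<beta> m x) | m. True})
         else as ! 0 \<in> {rp \<alpha> n | n. True} \<and>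
              (\<forall>i\<in>{1..length as - 2}. cs as i \<in> Lam) \<and>
              cs as (length as - 1) \<in> ({rp \<beta> m | m. True} \<union> {(\<lambda>x. - rp \<beta> m x) | m. True})"
    proof (cases "length as = 1")
      case True
      then have "as ! 0 = b" using as(5) cs0 by simp
      then show ?thesis using True bF as(3) by auto
    next
      case False
      have "\<forall>i\<in>{1..length as - 2}. cs as i \<in> Lam" using as(4) as(1) by auto
      then show ?thesis using False bF as(3,5) by auto
    qed
  qed
qed

lemma conn_iff: "\<alpha> \<in> Lam \<Longrightarrow> \<beta> \<in> Lam \<Longrightarrow> conn \<alpha> \<beta> \<longleftrightarrow> conn' \<alpha> \<beta>"
  using conn_imp imp_conn by blast

end



context setting begin

lemma T_shift1: "T a b \<Longrightarrow> T (rp a 1) (rp b 1)"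
proof -
  assume "T a b"
  then obtain r where r: "a \<in> Lam" "b \<in> Lam" "r \<in> Lam" "b = rp (\<lambda>x. a x + r x) 1" unfolding T_def by blast
  have "rp b 1 = rp (\<lambda>x. rp a 1 x + rp r 1 x) 1" using r(4) rp_add[of a r 1] by simp
  moreover have "rp a 1 \<in> Lam" "rp b 1 \<in> Lam" "rp r 1 \<in> Lam" using r rp_Lam by auto
  ultimately show ?thesis unfolding T_def by blast
qed

lemma T_shift: "T a b \<Longrightarrow> T (rp a n) (rp b n)"
proof (induct n)
  case 0
  then have "a \<in> Lam" "b \<in> Lam" unfolding T_def by auto
  then show ?case using 0 rp_0 Lam_D by simp
next
  case (Suc n)
  then have "T (rp (rp a n) 1) (rp (rp b n) 1)" using T_shift1[of "rp a n" "rp b n"] by blast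
  then show ?case by (simp only: rp_Suc)
qed

lemma Tstar_shift: "T\<^sup>*\<^sup>* a b \<Longrightarrow> T\<^sup>*\<^sup>* (rp a n) (rp b n)"
proof (induct rule: rtranclp_induct)
  case base then show ?case by simp
next
  case (step b c)
  then show ?case using T_shift[OF step(2), of n] by (meson rtranclp.rtrancl_into_rtrancl)
qed

lemma T_neg: "T a b \<Longrightarrow> T (\<lambda>x. - a x) (\<lambda>x. - b x)"
proof -
  assume "T a b"
  then obtain r where r: "a \<in> Lam" "b \<in> Lam" "r \<in> Lam" "b = rp (\<lambda>x. a x + r x) 1" unfolding T_def by blast
  have "(\<lambda>x. - b x) = rp (\<lambda>x. - (a x + r x)) 1" using r(4) rp_neg[of "\<lambda>x. a x + r x" 1] by simp
  also have "(\<lambda>x. - (a x + r x)) = (\<lambda>x. (- a x) + (- r x))" by (rule ext) simp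
  finally have e: "(\<lambda>x. - b x) = rp (\<lambda>x. (- a x) + (- r x)) 1" .
  have l: "(\<lambda>x. - a x) \<in> Lam" "(\<lambda>x. - b x) \<in> Lam" "(\<lambda>x. - r x) \<in> Lam" using r neg_Lam by auto
  show ?thesis unfolding T_def
    by (intro conjI bexI[of _ "\<lambda>x. - r x"]) (use e l in auto)
qed

lemma Tstar_neg: "T\<^sup>*\<^sup>* a b \<Longrightarrow> T\<^sup>*\<^sup>* (\<lambda>x. - a x) (\<lambda>x. - b x)"
proof (induct rule: rtranclp_induct)
  case base then show ?case by simp
next
  case (step b c)
  then show ?case using T_neg[OF step(2)] by (meson rtranclp.rtrancl_into_rtrancl)
qed

lemma T_rev: "T a b \<Longrightarrow> T b (rp a 2)"
proof -
  assume "T a b"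
  then obtain r where r: "a \<in> Lam" "b \<in> Lam" "r \<in> Lam" "b = rp (\<lambda>x. a x + r x) 1" unfolding T_def by blast
  have "(\<lambda>x. b x + (- rp r 1 x)) = (\<lambda>x. rp a 1 x + rp r 1 x + (- rp r 1 x))" using r(4) rp_add[of a r 1] by simp
  also have "\<dots> = rp a 1" by simp
  finally have e0: "(\<lambda>x. b x + (- rp r 1 x)) = rp a 1" .
  have e: "rp (\<lambda>x. b x + (- rp r 1 x)) 1 = rp a 2" unfolding e0 rp_rp by (simp add: numeral_2_eq_2)
  have l: "(\<lambda>x. - rp r 1 x) \<in> Lam" "rp a 2 \<in> Lam" using r neg_Lam rp_Lam by auto
  show ?thesis unfolding T_def
    by (intro conjI bexI[of _ "\<lambda>x. - rp r 1 x"]) (use e l r in auto)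
qed

lemma Tstar_rev: "T\<^sup>*\<^sup>* a b \<Longrightarrow> a \<in> Lam \<Longrightarrow> \<exists>p. T\<^sup>*\<^sup>* b (rp a p)"
proof (induct rule: rtranclp_induct)
  case base then show ?case using rp_0 Lam_D by (intro exI[of _ 0]) simp
next
  case (step b c)
  then obtain p where p: "T\<^sup>*\<^sup>* b (rp a p)" by blast
  have "T c (rp b 2)" using T_rev[OF step(2)] .
  moreover have "T\<^sup>*\<^sup>* (rp b 2) (rp a (p + 2))" using Tstar_shift[OF p, of 2] by (simp add: rp_rp)
  ultimately show ?case by (meson converse_rtranclp_into_rtranclp)
qed

lemma negneg: "(\<lambda>x. - (\<lambda>x. - f x) x) = (f :: 'v \<Rightarrow> 'k)" by simp

lemma conn'_sym: "\<alpha> \<in> Lam \<Longrightarrow> \<beta> \<in> Lam \<Longrightarrow> conn' \<alpha> \<beta> \<Longrightarrow> conn' \<beta> \<alpha>"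
proof -
  assume a: "\<alpha> \<in> Lam" "\<beta> \<in> Lam" "conn' \<alpha> \<beta>"
  then obtain n m b where b: "b = rp \<beta> m \<or> b = (\<lambda>x. - rp \<beta> m x)" "T\<^sup>*\<^sup>* (rp \<alpha> n) b"
    unfolding conn'_def by blast
  obtain p where p: "T\<^sup>*\<^sup>* b (rp (rp \<alpha> n) p)" using Tstar_rev[OF b(2) rp_Lam[OF a(1)]] by blast
  then have p': "T\<^sup>*\<^sup>* b (rp \<alpha> (n + p))" by (simp add: rp_rp)
  show ?thesis
  proof (cases "b = rp \<beta> m")
    case True
    then show ?thesis unfolding conn'_def using p' by blast
  next
    case False
    then have bb: "b = (\<lambda>x. - rp \<beta> m x)" using b(1) by blast
    have "T\<^sup>*\<^sup>* (\<lambda>x. - b x) (\<lambda>x. - rp \<alpha> (n + p) x)" using Tstar_neg[OF p'] .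
    then have "T\<^sup>*\<^sup>* (rp \<beta> m) (\<lambda>x. - rp \<alpha> (n + p) x)" using bb by simp
    then show ?thesis unfolding conn'_def by blast
  qed
qed

lemma conn'_trans: "\<alpha> \<in> Lam \<Longrightarrow> \<beta> \<in> Lam \<Longrightarrow> \<gamma> \<in> Lam \<Longrightarrow> conn' \<alpha> \<beta> \<Longrightarrow> conn' \<beta> \<gamma> \<Longrightarrow> conn' \<alpha> \<gamma>"
proof -
  assume a: "\<alpha> \<in> Lam" "\<beta> \<in> Lam" "\<gamma> \<in> Lam" "conn' \<alpha> \<beta>" "conn' \<beta> \<gamma>"
  then obtain n1 m1 b1 where b1: "b1 = rp \<beta> m1 \<or> b1 = (\<lambda>x. - rp \<beta> m1 x)" "T\<^sup>*\<^sup>* (rp \<alpha> n1) b1"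
    unfolding conn'_def by blast
  obtain n2 m2 b2 where b2: "b2 = rp \<gamma> m2 \<or> b2 = (\<lambda>x. - rp \<gamma> m2 x)" "T\<^sup>*\<^sup>* (rp \<beta> n2) b2"
    using a unfolding conn'_def by blast
  have P1: "T\<^sup>*\<^sup>* (rp \<alpha> (n1 + n2)) (rp b1 n2)" using Tstar_shift[OF b1(2), of n2] by (simp add: rp_rp)
  have P2: "T\<^sup>*\<^sup>* (rp \<beta> (m1 + n2)) (rp b2 m1)" using Tstar_shift[OF b2(2), of m1] by (simp add: rp_rp add.commute)
  have e2: "rp b2 m1 = rp \<gamma> (m2 + m1) \<or> rp b2 m1 = (\<lambda>x. - rp \<gamma> (m2 + m1) x)"
    using b2(1) by (auto simp: rp_rp rp_neg)
  show ?thesis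
  proof (cases "b1 = rp \<beta> m1")
    case True
    then have "rp b1 n2 = rp \<beta> (m1 + n2)" by (simp add: rp_rp)
    then have "T\<^sup>*\<^sup>* (rp \<alpha> (n1 + n2)) (rp b2 m1)" using P1 P2 by simp
    then show ?thesis unfolding conn'_def using e2 by blast
  next
    case False
    then have "b1 = (\<lambda>x. - rp \<beta> m1 x)" using b1(1) by blast
    then have "rp b1 n2 = (\<lambda>x. - rp \<beta> (m1 + n2) x)" by (simp add: rp_rp rp_neg)
    moreover have "T\<^sup>*\<^sup>* (\<lambda>x. - rp \<beta> (m1 + n2) x) (\<lambda>x. - rp b2 m1 x)" using Tstar_neg[OF P2] .
    ultimately have Q: "T\<^sup>*\<^sup>* (rp \<alpha> (n1 + n2)) (\<lambda>x. - rp b2 m1 x)" using P1 by simp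
    have "(\<lambda>x. - rp b2 m1 x) = rp \<gamma> (m2 + m1) \<or> (\<lambda>x. - rp b2 m1 x) = (\<lambda>x. - rp \<gamma> (m2 + m1) x)"
      using e2 by auto
    then show ?thesis unfolding conn'_def using Q by blast
  qed
qed

lemma conn_sym: "\<alpha> \<in> Lam \<Longrightarrow> \<beta> \<in> Lam \<Longrightarrow> conn \<alpha> \<beta> \<Longrightarrow> conn \<beta> \<alpha>"
  using conn_iff conn'_sym by blast
lemma conn_trans: "\<alpha> \<in> Lam \<Longrightarrow> \<beta> \<in> Lam \<Longrightarrow> \<gamma> \<in> Lam \<Longrightarrow> conn \<alpha> \<beta> \<Longrightarrow> conn \<beta> \<gamma> \<Longrightarrow> conn \<alpha> \<gamma>"
  using conn_iff conn'_trans by blast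
lemma conn_refl: "\<alpha> \<in> Lam \<Longrightarrow> conn \<alpha> \<alpha>"
  using conn_iff[of \<alpha> \<alpha>] unfolding conn'_def by blast

lemma conn_rp1: "\<alpha> \<in> Lam \<Longrightarrow> conn \<alpha> (rp \<alpha> 1)"
proof -
  assume a: "\<alpha> \<in> Lam"
  have "rp (rp \<alpha> 1) 0 = rp \<alpha> 1" using rp_0 rp_Lam[OF a] Lam_D by blast
  then have "conn' \<alpha> (rp \<alpha> 1)" unfolding conn'_def by (metis rtranclp.rtrancl_refl)
  then show ?thesis using conn_iff a rp_Lam by blast
qed

lemma conn_neg: "\<alpha> \<in> Lam \<Longrightarrow> conn \<alpha> (\<lambda>x. - \<alpha> x)"
proof -
  assume a: "\<alpha> \<in> Lam"
  have "rp (\<lambda>x. - \<alpha> x) 0 = (\<lambda>x. - \<alpha> x)" using rp_0 neg_Lam[OF a] Lam_D by blast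
  then have e: "(\<lambda>x. - rp (\<lambda>x. - \<alpha> x) 0 x) = rp \<alpha> 0" using rp_0 a Lam_D by simp
  have "conn' \<alpha> (\<lambda>x. - \<alpha> x)" unfolding conn'_def
    by (rule exI[of _ 0], rule exI[of _ 0], rule exI[of _ "rp \<alpha> 0"]) (use e in auto)
  then show ?thesis using conn_iff a neg_Lam by blast
qed

lemma conn_up: "\<alpha> \<in> Lam \<Longrightarrow> conn \<alpha> (up \<alpha>)"
proof -
  assume a: "\<alpha> \<in> Lam"
  have "rp (up \<alpha>) 1 = rp \<alpha> 0" using rp_up rp_0 a Lam_D by simp
  then have "conn' (up \<alpha>) \<alpha>" unfolding conn'_def by (metis rtranclp.rtrancl_refl)
  then have "conn (up \<alpha>) \<alpha>" using conn_iff a up_Lam by blast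
  then show ?thesis using conn_sym a up_Lam by blast
qed

lemma conn_step: "\<beta> \<in> Lam \<Longrightarrow> \<delta> \<in> Lam \<Longrightarrow> rp (\<lambda>x. \<beta> x + \<delta> x) 1 \<in> Lam \<Longrightarrow> conn \<beta> (rp (\<lambda>x. \<beta> x + \<delta> x) 1)"
proof -
  assume a: "\<beta> \<in> Lam" "\<delta> \<in> Lam" "rp (\<lambda>x. \<beta> x + \<delta> x) 1 \<in> Lam"
  have "T \<beta> (rp (\<lambda>x. \<beta> x + \<delta> x) 1)" unfolding T_def using a by blast
  moreover have "rp \<beta> 0 = \<beta>" "rp (rp (\<lambda>x. \<beta> x + \<delta> x) 1) 0 = rp (\<lambda>x. \<beta> x + \<delta> x) 1"
    using rp_0 a Lam_D by auto
  ultimately have "conn' \<beta> (rp (\<lambda>x. \<beta> x + \<delta> x) 1)" unfolding conn'_def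
    by (metis r_into_rtranclp)
  then show ?thesis using conn_iff a by blast
qed

lemma conn_sum_roots: "\<beta> \<in> Lam \<Longrightarrow> \<delta> \<in> Lam \<Longrightarrow> rp (\<lambda>x. \<beta> x + \<delta> x) 1 \<in> Lam \<Longrightarrow> conn \<beta> \<delta>"
proof -
  assume a: "\<beta> \<in> Lam" "\<delta> \<in> Lam" "rp (\<lambda>x. \<beta> x + \<delta> x) 1 \<in> Lam"
  have "(\<lambda>x. \<delta> x + \<beta> x) = (\<lambda>x. \<beta> x + \<delta> x)" by (rule ext) (simp add: add.commute)
  then have "conn \<delta> (rp (\<lambda>x. \<beta> x + \<delta> x) 1)" using conn_step[of \<delta> \<beta>] a by simp
  then show ?thesis using conn_step[OF a] conn_sym conn_trans a by blast
qed

end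



context setting begin

lemma lin_ext:
  assumes add: "\<And>x y. f (x + y) = f x + f y" and sca: "\<And>c x. f (sc c x) = sc c (f x)"
    and gen: "\<And>x. x \<in> X0 \<Longrightarrow> f x \<in> Z" and Z: "subspace Z" and x: "x \<in> span X0"
  shows "f x \<in> Z"
proof -
  have f0: "f 0 = 0" using add[of 0 0] by simp
  have "subspace {x. f x \<in> Z}" unfolding subspace_def
    using Z f0 add sca by (auto simp: subspace_0 subspace_add subspace_scale)
  then have "span X0 \<subseteq> {x. f x \<in> Z}" using gen by (intro span_minimal) auto
  then show ?thesis using x by blast
qed

lemma bil:
  assumes X: "X \<subseteq> span X0" and Y: "Y \<subseteq> span Y0" and Z: "subspace Z"
    and gen: "\<And>x y. x \<in> X0 \<Longrightarrow> y \<in> Y0 \<Longrightarrow> br x y \<in> Z"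
    and x: "x \<in> X" and y: "y \<in> Y"
  shows "br x y \<in> Z"
proof -
  have x': "x \<in> span X0" using X x by blast
  have y': "y \<in> span Y0" using Y y by blast
  have "\<And>y0. y0 \<in> Y0 \<Longrightarrow> br x y0 \<in> Z"
    by (rule lin_ext[of "\<lambda>x. br x y0" for y0, OF br_lin1 br_scale1 _ Z x']) (rule gen)
  then show ?thesis
    by (rule lin_ext[of "br x", OF br_lin2 br_scale2 _ Z y'])
qed

lemma pinv_sum: "pinv (sum f A) = (\<Sum>i\<in>A. pinv (f i))"
  by (induct A rule: infinite_finite_induct) (auto simp: pinv_add)

lemma RS_graded: assumes v: "v \<in> RS \<alpha>" shows "v \<in> span (\<Union>g. RS \<alpha> \<inter> Lg g)"
proof -
  have "v \<in> span (\<Union>g. Lg g)" using Lg_span by simp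
  from this[unfolded span_UN_sum[OF Lg_sub']]
  obtain F a where F: "finite F" "\<forall>i\<in>F. a i \<in> Lg i" "v = sum a F" by blast
  have "\<forall>i\<in>F. a i \<in> RS \<alpha>"
  proof
    fix i assume i: "i \<in> F"
    show "a i \<in> RS \<alpha>"
    proof (rule RS_I)
      fix h assume h: "h \<in> S"
      define c where "c j = br h (a j) - sc (\<alpha> h) (phi (a j))" for j
      have "\<forall>j\<in>F. c j \<in> Lg j"
      proof
        fix j assume j: "j \<in> F"
        have "br h (a j) \<in> Lg j" using br_grad[OF S_L0[OF h], of "a j" j] F(2) j by simp
        moreover have "sc (\<alpha> h) (phi (a j)) \<in> Lg j" using phi_grad F(2) j Lg_sub subspace_scale by blast
        ultimately show "c j \<in> Lg j" unfolding c_def using Lg_sub subspace_diff by blast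
      qed
      moreover have "sum c F = 0"
        using RS_D[OF v h] F(3) unfolding c_def
        by (simp add: sum_subtractf br_sum2 phi_sum scale_sum_right)
      ultimately have "\<forall>j\<in>F. c j = 0" using F(1) Lg_ind by blast
      then show "br h (a i) = sc (\<alpha> h) (phi (a i))" using i unfolding c_def by simp
    qed
  qed
  then show ?thesis unfolding F(3) using F(2) by (intro span_sum) (auto intro: span_base)
qed

lemma br_RS_hom:
  assumes x: "x \<in> RS \<alpha>" "x \<in> Lg a" and y: "y \<in> RS \<beta>" "y \<in> Lg b"
  shows "br x y \<in> RS (rp (\<lambda>h. \<alpha> h + \<beta> h) 1)"
proof (rule RS_I)
  fix h assume h: "h \<in> S"
  define h' where "h' = pinv h"
  have h': "h' \<in> S" "h' \<in> Lg 0" "phi h' = h" unfolding h'_def using pinv_S[OF h] S_L0 by auto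
  define P where "P = phi (br x y)"
  have J: "sc (eps b 0) (br (phi h') (br x y)) + sc (eps 0 a) (br (phi x) (br y h'))
         + sc (eps a b) (br (phi y) (br h' x)) = 0"
    using jacobi[OF h'(2) x(2) y(2)] .
  have 1: "br y h' = - sc (\<beta> h') (phi y)"
    using skew[OF y(2) h'(2)] RS_D[OF y(1) h'(1)] eps_0r by simp
  have 2: "br (phi x) (br y h') = - sc (\<beta> h') P"
    unfolding 1 P_def by (simp add: br_neg2 br_scale2 phi_br)
  have 3: "br h' x = sc (\<alpha> h') (phi x)" using RS_D[OF x(1) h'(1)] .
  have 4: "br (phi y) (phi x) = - sc (eps b a) P"
    unfolding P_def phi_br using skew[OF phi_grad[OF y(2)] phi_grad[OF x(2)]] .
  have 5: "sc (eps a b) (br (phi y) (br h' x)) = - sc (\<alpha> h') P"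
    unfolding 3 br_scale2 4 using eps_inv[of a b] by (simp add: scale_left_commute)
  have "br h (br x y) - sc (\<beta> h') P - sc (\<alpha> h') P = 0"
    using J eps_0l eps_0r 2 5 h'(3) by (simp add: algebra_simps)
  then have "br h (br x y) = sc (\<alpha> h' + \<beta> h') P" by (simp add: algebra_simps)
  moreover have "rp (\<lambda>h. \<alpha> h + \<beta> h) 1 h = \<alpha> h' + \<beta> h'" using h unfolding rp_eq h'_def by simp
  ultimately show "br h (br x y) = sc (rp (\<lambda>h. \<alpha> h + \<beta> h) 1 h) (phi (br x y))" unfolding P_def by simp
qed

lemma br_RS:
  assumes x: "x \<in> RS \<alpha>" and y: "y \<in> RS \<beta>"
  shows "br x y \<in> RS (rp (\<lambda>h. \<alpha> h + \<beta> h) 1)"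
proof (rule bil[of "RS \<alpha>" "\<Union>g. RS \<alpha> \<inter> Lg g" "RS \<beta>" "\<Union>g. RS \<beta> \<inter> Lg g"])
  show "RS \<alpha> \<subseteq> span (\<Union>g. RS \<alpha> \<inter> Lg g)" "RS \<beta> \<subseteq> span (\<Union>g. RS \<beta> \<inter> Lg g)"
    using RS_graded by blast+
  show "subspace (RS (rp (\<lambda>h. \<alpha> h + \<beta> h) 1))" by (rule RS_sub)
  show "x \<in> RS \<alpha>" "y \<in> RS \<beta>" using x y .
  fix x y assume "x \<in> (\<Union>g. RS \<alpha> \<inter> Lg g)" "y \<in> (\<Union>g. RS \<beta> \<inter> Lg g)"
  then show "br x y \<in> RS (rp (\<lambda>h. \<alpha> h + \<beta> h) 1)" using br_RS_hom by blast
qed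

lemma H_RS0: "v \<in> H \<Longrightarrow> v \<in> RS (\<lambda>_. 0)"
  by (rule RS_I) (simp add: H_ab S_H)

lemma RS0_H: assumes v: "v \<in> RS (\<lambda>_. 0)" shows "v \<in> H"
proof -
  have "v \<in> span (\<Union>i\<in>J. W i)" using spl_parts(3) by simp
  from this[unfolded span_UN_sum[OF spl_parts(1)]]
  obtain F a where F: "finite F" "F \<subseteq> J" "\<forall>i\<in>F. a i \<in> W i" "v = sum a F" by blast
  have z: "\<forall>i\<in>F. i \<noteq> None \<longrightarrow> a i = 0"
  proof (intro ballI impI)
    fix i assume i: "i \<in> F" "i \<noteq> None"
    then obtain \<alpha> where al: "i = Some \<alpha>" "\<alpha> \<in> Lam" using F(2) unfolding J_def by auto
    obtain h where h: "h \<in> S" "\<alpha> h \<noteq> 0" using Lam_nz[OF al(2)] by blast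
    define c where "c j = pinv (br h (a j))" for j
    have cW: "\<forall>j\<in>F. c j \<in> W j"
    proof
      fix j assume j: "j \<in> F"
      show "c j \<in> W j"
      proof (cases j)
        case None
        then have "a j \<in> H" using F(3) j by auto
        then show ?thesis unfolding c_def using None H_ab S_H[OF h(1)] subspace_0[OF H_sub] by simp
      next
        case (Some \<gamma>)
        then have "a j \<in> RS \<gamma>" using F(3) j by auto
        then have "c j = sc (\<gamma> h) (a j)" unfolding c_def using RS_D[of "a j" \<gamma> h] h(1) by (simp add: pinv_scale)
        then show ?thesis using Some \<open>a j \<in> RS \<gamma>\<close> RS_sub subspace_scale by auto
      qed
    qed
    have "sum c F = pinv (br h v)" unfolding c_def F(4) by (simp add: br_sum2 pinv_sum)
    also have "\<dots> = 0" using RS_D[OF v h(1)] by simp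
    finally have "\<forall>j\<in>F. c j = 0" using spl_parts(2) F(1,2) cW by blast
    then have ci: "c i = 0" using i by blast
    have ai: "a i \<in> RS \<alpha>" using F(3) i al by auto
    have "br h (a i) = sc (\<alpha> h) (phi (a i))" by (rule RS_D[OF ai h(1)])
    then have "c i = sc (\<alpha> h) (a i)" unfolding c_def by (simp add: pinv_scale)
    then have "sc (\<alpha> h) (a i) = 0" using ci by simp
    then show "a i = 0" using h(2) by simp
  qed
  have aH: "\<forall>i\<in>F. a i \<in> H"
  proof
    fix i assume i: "i \<in> F"
    show "a i \<in> H"
    proof (cases i)
      case None then show ?thesis using F(3) i by auto
    next
      case (Some \<gamma>) then show ?thesis using z i subspace_0[OF H_sub] by auto
    qed
  qed
  show ?thesis unfolding F(4) by (rule subspace_sum[OF H_sub]) (use aH in blast)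
qed

lemma rp_zero: "rp (\<lambda>_. 0) n = (\<lambda>_. 0)" unfolding rp_eq by (rule ext) simp

lemma br_RS_neg_H: "x \<in> RS \<beta> \<Longrightarrow> y \<in> RS (\<lambda>h. - \<beta> h) \<Longrightarrow> br x y \<in> H"
proof -
  assume "x \<in> RS \<beta>" "y \<in> RS (\<lambda>h. - \<beta> h)"
  then have "br x y \<in> RS (rp (\<lambda>h. \<beta> h + - \<beta> h) 1)" by (rule br_RS)
  moreover have "rp (\<lambda>h. \<beta> h + - \<beta> h) 1 = (\<lambda>_. 0)" by (simp add: rp_zero)
  ultimately have "br x y \<in> RS (\<lambda>_. 0)" by simp
  then show "br x y \<in> H" by (rule RS0_H)
qed

end



context setting begin

abbreviation "cls \<equiv> root_class sc Lg br phi H"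
abbreviation "HP \<equiv> H_part sc Lg br phi H"
abbreviation "VP \<equiv> V_part sc Lg br phi H"
abbreviation "LP \<equiv> L_part sc Lg br phi H"

lemma cls_mem: "\<beta> \<in> cls \<alpha> \<longleftrightarrow> \<beta> \<in> Lam \<and> conn \<beta> \<alpha>" unfolding root_class_def by blast
lemma cls_Lam: "\<beta> \<in> cls \<alpha> \<Longrightarrow> \<beta> \<in> Lam" unfolding cls_mem by blast
lemma cls_self: "\<alpha> \<in> Lam \<Longrightarrow> \<alpha> \<in> cls \<alpha>" unfolding cls_mem using conn_refl by blast

lemma cls_eq: assumes a: "\<alpha> \<in> Lam" "\<beta> \<in> cls \<alpha>" shows "cls \<beta> = cls \<alpha>"
proof -
  have b: "\<beta> \<in> Lam" "conn \<beta> \<alpha>" using a(2) cls_mem by auto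
  then have c: "conn \<alpha> \<beta>" using conn_sym a(1) by blast
  show ?thesis
  proof (intro set_eqI iffI)
    fix x assume "x \<in> cls \<beta>"
    then have "x \<in> Lam" "conn x \<beta>" using cls_mem by auto
    then show "x \<in> cls \<alpha>" using conn_trans[of x \<beta> \<alpha>] b a(1) cls_mem by blast
  next
    fix x assume "x \<in> cls \<alpha>"
    then have "x \<in> Lam" "conn x \<alpha>" using cls_mem by auto
    then show "x \<in> cls \<beta>" using conn_trans[of x \<alpha> \<beta>] c b a(1) cls_mem by blast
  qed
qed

lemma cls_disj: "\<alpha> \<in> Lam \<Longrightarrow> \<gamma> \<in> Lam \<Longrightarrow> cls \<alpha> \<noteq> cls \<gamma> \<Longrightarrow> \<beta> \<in> cls \<alpha> \<Longrightarrow> \<beta> \<notin> cls \<gamma>"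
  using cls_eq by metis

lemma cls_conn: "\<alpha> \<in> Lam \<Longrightarrow> \<beta> \<in> cls \<alpha> \<Longrightarrow> \<gamma> \<in> Lam \<Longrightarrow> conn \<gamma> \<beta> \<Longrightarrow> \<gamma> \<in> cls \<alpha>"
proof -
  assume a: "\<alpha> \<in> Lam" "\<beta> \<in> cls \<alpha>" "\<gamma> \<in> Lam" "conn \<gamma> \<beta>"
  have "\<beta> \<in> Lam" "conn \<beta> \<alpha>" using a(2) cls_mem by auto
  then have "conn \<gamma> \<alpha>" using conn_trans[of \<gamma> \<beta> \<alpha>] a by blast
  then show ?thesis using a(3) cls_mem by blast
qed

lemma cls_rp: "\<alpha> \<in> Lam \<Longrightarrow> \<beta> \<in> cls \<alpha> \<Longrightarrow> rp \<beta> 1 \<in> cls \<alpha>"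
proof -
  assume a: "\<alpha> \<in> Lam" "\<beta> \<in> cls \<alpha>"
  have b: "\<beta> \<in> Lam" by (rule cls_Lam[OF a(2)])
  have "conn (rp \<beta> 1) \<beta>" using conn_sym[OF b rp_Lam[OF b] conn_rp1[OF b]] .
  then show ?thesis using cls_conn[OF a rp_Lam[OF b]] by blast
qed

lemma cls_up: "\<alpha> \<in> Lam \<Longrightarrow> \<beta> \<in> cls \<alpha> \<Longrightarrow> up \<beta> \<in> cls \<alpha>"
proof -
  assume a: "\<alpha> \<in> Lam" "\<beta> \<in> cls \<alpha>"
  have b: "\<beta> \<in> Lam" by (rule cls_Lam[OF a(2)])
  have "conn (up \<beta>) \<beta>" using conn_sym[OF b up_Lam[OF b] conn_up[OF b]] .
  then show ?thesis using cls_conn[OF a up_Lam[OF b]] by blast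
qed

lemma cls_neg: "\<alpha> \<in> Lam \<Longrightarrow> \<beta> \<in> cls \<alpha> \<Longrightarrow> (\<lambda>x. - \<beta> x) \<in> cls \<alpha>"
proof -
  assume a: "\<alpha> \<in> Lam" "\<beta> \<in> cls \<alpha>"
  have b: "\<beta> \<in> Lam" by (rule cls_Lam[OF a(2)])
  have "conn (\<lambda>x. - \<beta> x) \<beta>" using conn_sym[OF b neg_Lam[OF b] conn_neg[OF b]] .
  then show ?thesis using cls_conn[OF a neg_Lam[OF b]] by blast
qed

lemma cls_rp_inv: "\<alpha> \<in> Lam \<Longrightarrow> \<beta> \<in> Lam \<Longrightarrow> rp \<beta> 1 \<in> cls \<alpha> \<Longrightarrow> \<beta> \<in> cls \<alpha>"
proof -
  assume a: "\<alpha> \<in> Lam" "\<beta> \<in> Lam" "rp \<beta> 1 \<in> cls \<alpha>"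
  have "conn \<beta> (rp \<beta> 1)" using conn_rp1[OF a(2)] .
  then show ?thesis using cls_conn[OF a(1) a(3) a(2)] by blast
qed

lemma cls_sum: "\<alpha> \<in> Lam \<Longrightarrow> \<beta> \<in> cls \<alpha> \<Longrightarrow> \<delta> \<in> Lam \<Longrightarrow> rp (\<lambda>x. \<beta> x + \<delta> x) 1 \<in> Lam \<Longrightarrow>
   \<delta> \<in> cls \<alpha> \<and> rp (\<lambda>x. \<beta> x + \<delta> x) 1 \<in> cls \<alpha>"
proof -
  assume a: "\<alpha> \<in> Lam" "\<beta> \<in> cls \<alpha>" "\<delta> \<in> Lam" "rp (\<lambda>x. \<beta> x + \<delta> x) 1 \<in> Lam"
  have b: "\<beta> \<in> Lam" by (rule cls_Lam[OF a(2)])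
  have c1: "conn \<beta> \<delta>" using conn_sum_roots[OF b a(3) a(4)] .
  have c2: "conn \<beta> (rp (\<lambda>x. \<beta> x + \<delta> x) 1)" using conn_step[OF b a(3) a(4)] .
  have "\<delta> \<in> cls \<alpha>" using cls_conn[OF a(1) a(2) a(3)] conn_sym[OF b a(3) c1] by blast
  moreover have "rp (\<lambda>x. \<beta> x + \<delta> x) 1 \<in> cls \<alpha>"
    using cls_conn[OF a(1) a(2) a(4)] conn_sym[OF b a(4) c2] by blast
  ultimately show ?thesis by blast
qed

lemma Z0:
  assumes a: "\<alpha> \<in> Lam" "\<beta> \<in> cls \<alpha>" "\<delta> \<in> Lam" "\<delta> \<notin> cls \<alpha>"
  shows "RS (rp (\<lambda>x. \<beta> x + \<delta> x) 1) = {0}"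
proof -
  define \<gamma> where "\<gamma> = rp (\<lambda>x. \<beta> x + \<delta> x) 1"
  have b: "\<beta> \<in> Lam" by (rule cls_Lam[OF a(2)])
  have gD: "\<gamma> \<in> D" unfolding \<gamma>_def by (intro rp_D D_addf Lam_D b a(3))
  have gL: "\<gamma> \<notin> Lam" using cls_sum[OF a(1,2,3)] a(4) unfolding \<gamma>_def by blast
  have g0: "\<gamma> \<noteq> (\<lambda>_. 0)"
  proof
    assume g: "\<gamma> = (\<lambda>_. 0)"
    have "\<delta> = (\<lambda>x. - \<beta> x)"
    proof
      fix x show "\<delta> x = - \<beta> x"
      proof (cases "x \<in> S")
        case True
        have "\<gamma> (phi x) = \<beta> x + \<delta> x" unfolding \<gamma>_def rp_eq using phi_S[OF True] by simp
        then show ?thesis using g by (simp add: eq_neg_iff_add_eq_0 add.commute)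
      next
        case False
        then show ?thesis using D_out[OF Lam_D[OF b]] D_out[OF Lam_D[OF a(3)]] by simp
      qed
    qed
    then show False using cls_neg[OF a(1,2)] a(4) by simp
  qed
  have "RS \<gamma> = {0}" using gD gL g0 unfolding roots_def by blast
  then show ?thesis unfolding \<gamma>_def .
qed

lemma orth_RS:
  assumes "\<alpha> \<in> Lam" "\<beta> \<in> cls \<alpha>" "\<delta> \<in> Lam" "\<delta> \<notin> cls \<alpha>" "x \<in> RS \<beta>" "y \<in> RS \<delta>"
  shows "br x y = 0"
  using br_RS[OF assms(5,6)] Z0[OF assms(1-4)] by blast

lemma HP_gen_H: "\<beta> \<in> C \<Longrightarrow> x \<in> RS \<beta> \<Longrightarrow> y \<in> RS (\<lambda>h. - \<beta> h) \<Longrightarrow> br x y \<in> HP C"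
  unfolding H_part_def by (rule span_base) blast

lemma HP_H: "HP C \<subseteq> H"
  unfolding H_part_def by (rule span_minimal[OF _ H_sub]) (auto intro: br_RS_neg_H)

lemma HP_sub: "subspace (HP C)" unfolding H_part_def by simp
lemma VP_sub: "subspace (VP C)" unfolding V_part_def by simp
lemma RS_VP: "\<beta> \<in> C \<Longrightarrow> x \<in> RS \<beta> \<Longrightarrow> x \<in> VP C" unfolding V_part_def by (rule span_base) blast

lemma lin_ext_RS:
  assumes add: "\<And>x y. f (x + y) = f x + f y" and sca: "\<And>c x. f (sc c x) = sc c (f x)"
    and gen: "\<And>x g. x \<in> RS \<beta> \<Longrightarrow> x \<in> Lg g \<Longrightarrow> f x \<in> Z" and Z: "subspace Z" and x: "x \<in> RS \<beta>"
  shows "f x \<in> Z"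
  by (rule lin_ext[OF add sca _ Z RS_graded[OF x]]) (use gen in blast)

lemma HP_orth_hom:
  assumes a: "\<alpha> \<in> Lam" "\<beta> \<in> cls \<alpha>" "\<delta> \<in> Lam" "\<delta> \<notin> cls \<alpha>"
    and x: "x \<in> RS \<beta>" "x \<in> Lg p" and y: "y \<in> RS (\<lambda>h. - \<beta> h)" "y \<in> Lg q"
    and v: "v \<in> RS \<delta>" "v \<in> Lg r"
  shows "br (br x y) v = 0"
proof -
  define z where "z = pinv v"
  have z: "z \<in> RS (up \<delta>)" "z \<in> Lg r" "phi z = v" unfolding z_def using pinv_RS[OF v(1)] pinv_grad[OF v(2)] by auto
  have ud1: "up \<delta> \<in> Lam" using up_Lam[OF a(3)] .
  have ud2: "up \<delta> \<notin> cls \<alpha>"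
  proof
    assume "up \<delta> \<in> cls \<alpha>"
    then have "rp (up \<delta>) 1 \<in> cls \<alpha>" by (rule cls_rp[OF a(1)])
    then show False using rp_up[OF Lam_D[OF a(3)]] a(4) by simp
  qed
  note ud = ud1 ud2
  have J: "sc (eps r p) (br (phi x) (br y z)) + sc (eps p q) (br (phi y) (br z x))
         + sc (eps q r) (br (phi z) (br x y)) = 0" using jacobi[OF x(2) y(2) z(2)] .
  have "br y z \<in> RS (rp (\<lambda>h. (\<lambda>h. - \<beta> h) h + up \<delta> h) 1)" by (rule br_RS[OF y(1) z(1)])
  then have 1: "br y z = 0" using Z0[OF a(1) cls_neg[OF a(1,2)] ud] by simp
  have "br z x \<in> RS (rp (\<lambda>h. up \<delta> h + \<beta> h) 1)" by (rule br_RS[OF z(1) x(1)])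
  moreover have "(\<lambda>h. up \<delta> h + \<beta> h) = (\<lambda>h. \<beta> h + up \<delta> h)" by (rule ext) (simp add: add.commute)
  ultimately have "br z x \<in> RS (rp (\<lambda>h. \<beta> h + up \<delta> h) 1)" by simp
  then have 2: "br z x = 0" using Z0[OF a(1,2) ud] by simp
  have "sc (eps q r) (br v (br x y)) = 0" using J 1 2 z(3) by simp
  then have 3: "br v (br x y) = 0" using eps_nz by simp
  have "br x y \<in> Lg (p + q)" using br_grad[OF x(2) y(2)] .
  then show ?thesis using skew[OF _ v(2), of "br x y"] 3 by simp
qed

lemma HP_orth:
  assumes a: "\<alpha> \<in> Lam" "\<delta> \<in> Lam" "\<delta> \<notin> cls \<alpha>" and h: "h \<in> HP (cls \<alpha>)" and v: "v \<in> RS \<delta>"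
  shows "br h v = 0"
proof -
  have gen: "\<And>\<beta> x y. \<beta> \<in> cls \<alpha> \<Longrightarrow> x \<in> RS \<beta> \<Longrightarrow> y \<in> RS (\<lambda>h. - \<beta> h) \<Longrightarrow> br (br x y) v = 0"
  proof -
    fix \<beta> x y assume b: "\<beta> \<in> cls \<alpha>" and x: "x \<in> RS \<beta>" and y: "y \<in> RS (\<lambda>h. - \<beta> h)"
    have s0: "subspace {0::'v}" by simp
    have step1: "\<And>x p y q v'. x \<in> RS \<beta> \<Longrightarrow> x \<in> Lg p \<Longrightarrow> y \<in> RS (\<lambda>h. - \<beta> h) \<Longrightarrow> y \<in> Lg q \<Longrightarrow>
        v' \<in> RS \<delta> \<Longrightarrow> br (br x y) v' \<in> {0}"
      by (rule lin_ext_RS[of "br (br x y)" for x y, OF br_lin2 br_scale2 _ s0])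
         (auto intro: HP_orth_hom[OF a(1) b a(2,3)])
    have step2: "\<And>x y q. x \<in> RS \<beta> \<Longrightarrow> y \<in> RS (\<lambda>h. - \<beta> h) \<Longrightarrow> y \<in> Lg q \<Longrightarrow>
        (\<lambda>x. br (br x y) v) x \<in> {0}"
    proof -
      fix x y q assume x: "x \<in> RS \<beta>" and y: "y \<in> RS (\<lambda>h. - \<beta> h)" "y \<in> Lg q"
      show "(\<lambda>x. br (br x y) v) x \<in> {0}"
        by (rule lin_ext_RS[where f="\<lambda>x. br (br x y) v" and \<beta>=\<beta> and Z="{0}", OF _ _ _ s0 x])
           (auto simp: br_lin1 br_scale1 intro: step1[OF _ _ y v, simplified])
    qed
    have "(\<lambda>y. br (br x y) v) y \<in> {0}"
      by (rule lin_ext_RS[where f="\<lambda>y. br (br x y) v" and \<beta>="\<lambda>h. - \<beta> h" and Z="{0}", OF _ _ _ s0 y])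
         (auto simp: br_lin1 br_lin2 br_scale1 br_scale2 intro: step2[OF x, simplified])
    then show "br (br x y) v = 0" by simp
  qed
  have "(\<lambda>h. br h v) h \<in> {0}"
  proof (rule lin_ext[OF br_lin1 br_scale1 _ _ h[unfolded H_part_def]])
    show "subspace {0::'v}" by simp
  next
    fix w assume "w \<in> {br x y | x y \<beta>. \<beta> \<in> cls \<alpha> \<and> x \<in> RS \<beta> \<and> y \<in> RS (\<lambda>h. - \<beta> h)}"
    then show "br w v \<in> {0}" using gen by blast
  qed
  then show ?thesis by simp
qed

end



context setting begin

lemma LP_sub: "subspace (LP C)" unfolding L_part_def by (rule subspace_sums[OF HP_sub VP_sub])

lemma HP_LP: "x \<in> HP C \<Longrightarrow> x \<in> LP C"
  unfolding L_part_def using subspace_0[OF VP_sub] by force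
lemma VP_LP: "x \<in> VP C \<Longrightarrow> x \<in> LP C"
  unfolding L_part_def using subspace_0[OF HP_sub] by force
lemma LP_E: "x \<in> LP C \<Longrightarrow> (\<And>h v. h \<in> HP C \<Longrightarrow> v \<in> VP C \<Longrightarrow> x = h + v \<Longrightarrow> P) \<Longrightarrow> P"
  unfolding L_part_def by blast

lemma HP_graded: "HP C \<subseteq> span (\<Union>g. HP C \<inter> Lg g)"
proof -
  have "\<And>w. w \<in> {br x y | x y \<beta>. \<beta> \<in> C \<and> x \<in> RS \<beta> \<and> y \<in> RS (\<lambda>h. - \<beta> h)} \<Longrightarrow>
      w \<in> span (\<Union>g. HP C \<inter> Lg g)"
  proof -
    fix w assume "w \<in> {br x y | x y \<beta>. \<beta> \<in> C \<and> x \<in> RS \<beta> \<and> y \<in> RS (\<lambda>h. - \<beta> h)}"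
    then obtain x y \<beta> where w: "w = br x y" "\<beta> \<in> C" "x \<in> RS \<beta>" "y \<in> RS (\<lambda>h. - \<beta> h)" by blast
    have "br x y \<in> span (\<Union>g. HP C \<inter> Lg g)"
    proof (rule bil[of "RS \<beta>" "\<Union>g. RS \<beta> \<inter> Lg g" "RS (\<lambda>h. - \<beta> h)" "\<Union>g. RS (\<lambda>h. - \<beta> h) \<inter> Lg g"])
      show "RS \<beta> \<subseteq> span (\<Union>g. RS \<beta> \<inter> Lg g)" "RS (\<lambda>h. - \<beta> h) \<subseteq> span (\<Union>g. RS (\<lambda>h. - \<beta> h) \<inter> Lg g)"
        using RS_graded by blast+
      show "subspace (span (\<Union>g. HP C \<inter> Lg g))" by simp
      show "x \<in> RS \<beta>" "y \<in> RS (\<lambda>h. - \<beta> h)" using w by auto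
    next
      fix x' y' assume "x' \<in> (\<Union>g. RS \<beta> \<inter> Lg g)" "y' \<in> (\<Union>g. RS (\<lambda>h. - \<beta> h) \<inter> Lg g)"
      then obtain a b where ab: "x' \<in> RS \<beta>" "x' \<in> Lg a" "y' \<in> RS (\<lambda>h. - \<beta> h)" "y' \<in> Lg b" by blast
      have "br x' y' \<in> HP C \<inter> Lg (a + b)" using HP_gen_H[OF w(2) ab(1) ab(3)] br_grad[OF ab(2,4)] by blast
      then show "br x' y' \<in> span (\<Union>g. HP C \<inter> Lg g)" by (intro span_base) blast
    qed
    then show "w \<in> span (\<Union>g. HP C \<inter> Lg g)" using w by simp
  qed
  then show ?thesis unfolding H_part_def[of sc Lg br phi H C]
    by (intro span_minimal) auto
qed

lemma LP_graded: "LP C \<subseteq> span (\<Union>g. LP C \<inter> Lg g)"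
proof -
  define G where "G = span (\<Union>g. LP C \<inter> Lg g)"
  have HG: "HP C \<subseteq> G"
  proof -
    have "span (\<Union>g. HP C \<inter> Lg g) \<subseteq> G" unfolding G_def by (rule span_mono) (auto intro: HP_LP)
    then show ?thesis using HP_graded by blast
  qed
  have VG: "VP C \<subseteq> G"
  proof -
    have "(\<Union>\<beta>\<in>C. RS \<beta>) \<subseteq> G"
    proof
      fix x assume "x \<in> (\<Union>\<beta>\<in>C. RS \<beta>)"
      then obtain \<beta> where b: "\<beta> \<in> C" "x \<in> RS \<beta>" by blast
      have "span (\<Union>g. RS \<beta> \<inter> Lg g) \<subseteq> G" unfolding G_def
        by (rule span_mono) (use b in \<open>auto intro: VP_LP RS_VP\<close>)
      then show "x \<in> G" using RS_graded[OF b(2)] by blast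
    qed
    then show ?thesis unfolding V_part_def G_def by (intro span_minimal) auto
  qed
  show ?thesis
  proof
    fix x assume "x \<in> LP C"
    then obtain h v where "h \<in> HP C" "v \<in> VP C" "x = h + v" by (rule LP_E)
    then show "x \<in> span (\<Union>g. LP C \<inter> Lg g)" using HG VG unfolding G_def by (auto intro: span_add)
  qed
qed

lemma gamma_cases:
  assumes b: "\<beta> \<in> Lam" "\<delta> \<in> Lam"
  shows "rp (\<lambda>x. \<beta> x + \<delta> x) 1 \<in> Lam \<or> \<delta> = (\<lambda>x. - \<beta> x) \<or> RS (rp (\<lambda>x. \<beta> x + \<delta> x) 1) = {0}"
proof -
  define \<gamma> where "\<gamma> = rp (\<lambda>x. \<beta> x + \<delta> x) 1"
  have gD: "\<gamma> \<in> D" unfolding \<gamma>_def by (intro rp_D D_addf Lam_D b)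
  show ?thesis
  proof (cases "\<gamma> = (\<lambda>_. 0)")
    case True
    have "\<delta> = (\<lambda>x. - \<beta> x)"
    proof
      fix x show "\<delta> x = - \<beta> x"
      proof (cases "x \<in> S")
        case xS: True
        have "\<gamma> (phi x) = \<beta> x + \<delta> x" unfolding \<gamma>_def rp_eq using phi_S[OF xS] by simp
        then show ?thesis using True by (simp add: eq_neg_iff_add_eq_0 add.commute)
      next
        case False
        then show ?thesis using D_out[OF Lam_D[OF b(1)]] D_out[OF Lam_D[OF b(2)]] by simp
      qed
    qed
    then show ?thesis by blast
  next
    case False
    then have "\<gamma> \<in> Lam \<or> RS \<gamma> = {0}" using gD unfolding roots_def by blast
    then show ?thesis unfolding \<gamma>_def by blast
  qed
qed

lemma RS_H_br: "x \<in> RS \<beta> \<Longrightarrow> \<beta> \<in> D \<Longrightarrow> y \<in> H \<Longrightarrow> br x y \<in> RS (rp \<beta> 1)"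
proof -
  assume a: "x \<in> RS \<beta>" "\<beta> \<in> D" "y \<in> H"
  have "br x y \<in> RS (rp (\<lambda>h. \<beta> h + 0) 1)" using br_RS[OF a(1) H_RS0[OF a(3)]] by simp
  then show ?thesis by simp
qed

lemma H_RS_br: "x \<in> H \<Longrightarrow> y \<in> RS \<beta> \<Longrightarrow> br x y \<in> RS (rp \<beta> 1)"
proof -
  assume a: "x \<in> H" "y \<in> RS \<beta>"
  have "br x y \<in> RS (rp (\<lambda>h. 0 + \<beta> h) 1)" using br_RS[OF H_RS0[OF a(1)] a(2)] by simp
  then show ?thesis by simp
qed

lemma LP_closed:
  assumes a: "\<alpha> \<in> Lam" and x: "x \<in> LP (cls \<alpha>)"
  shows "br x y \<in> LP (cls \<alpha>)"
proof (rule bil[of "LP (cls \<alpha>)" "HP (cls \<alpha>) \<union> (\<Union>\<beta>\<in>cls \<alpha>. RS \<beta>)" UNIV "H \<union> (\<Union>\<delta>\<in>Lam. RS \<delta>)"])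
  show "LP (cls \<alpha>) \<subseteq> span (HP (cls \<alpha>) \<union> (\<Union>\<beta>\<in>cls \<alpha>. RS \<beta>))"
  proof
    fix w assume "w \<in> LP (cls \<alpha>)"
    then obtain h v where hv: "h \<in> HP (cls \<alpha>)" "v \<in> VP (cls \<alpha>)" "w = h + v" by (rule LP_E)
    have "h \<in> span (HP (cls \<alpha>) \<union> (\<Union>\<beta>\<in>cls \<alpha>. RS \<beta>))" using hv(1) by (auto intro: span_base)
    moreover have "v \<in> span (HP (cls \<alpha>) \<union> (\<Union>\<beta>\<in>cls \<alpha>. RS \<beta>))"
      using hv(2) unfolding V_part_def using span_mono[of "\<Union>\<beta>\<in>cls \<alpha>. RS \<beta>" "HP (cls \<alpha>) \<union> (\<Union>\<beta>\<in>cls \<alpha>. RS \<beta>)"] by blast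
    ultimately show "w \<in> span (HP (cls \<alpha>) \<union> (\<Union>\<beta>\<in>cls \<alpha>. RS \<beta>))" using hv(3) span_add by simp
  qed
  show "UNIV \<subseteq> span (H \<union> (\<Union>\<delta>\<in>Lam. RS \<delta>))" using span_all by simp
  show "subspace (LP (cls \<alpha>))" by (rule LP_sub)
  show "x \<in> LP (cls \<alpha>)" "y \<in> UNIV" using x by auto
next
  fix u w assume u: "u \<in> HP (cls \<alpha>) \<union> (\<Union>\<beta>\<in>cls \<alpha>. RS \<beta>)" and w: "w \<in> H \<union> (\<Union>\<delta>\<in>Lam. RS \<delta>)"
  have z: "0 \<in> LP (cls \<alpha>)" using subspace_0[OF LP_sub] .
  show "br u w \<in> LP (cls \<alpha>)"
  proof (cases "u \<in> HP (cls \<alpha>)")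
    case True
    then have uH: "u \<in> H" using HP_H by blast
    show ?thesis
    proof (cases "w \<in> H")
      case True then show ?thesis using H_ab uH z by simp
    next
      case False
      then obtain \<delta> where d: "\<delta> \<in> Lam" "w \<in> RS \<delta>" using w by blast
      show ?thesis
      proof (cases "\<delta> \<in> cls \<alpha>")
        case True
        have "br u w \<in> RS (rp \<delta> 1)" by (rule H_RS_br[OF uH d(2)])
        then show ?thesis using RS_VP cls_rp[OF a True] VP_LP by blast
      next
        case False
        then show ?thesis using HP_orth[OF a d(1) False \<open>u \<in> HP (cls \<alpha>)\<close> d(2)] z by simp
      qed
    qed
  next
    case False
    then obtain \<beta> where b: "\<beta> \<in> cls \<alpha>" "u \<in> RS \<beta>" using u by blast
    have bL: "\<beta> \<in> Lam" by (rule cls_Lam[OF b(1)])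
    show ?thesis
    proof (cases "w \<in> H")
      case True
      have "br u w \<in> RS (rp \<beta> 1)" by (rule RS_H_br[OF b(2) Lam_D[OF bL] True])
      then show ?thesis using RS_VP cls_rp[OF a b(1)] VP_LP by blast
    next
      case False
      then obtain \<delta> where d: "\<delta> \<in> Lam" "w \<in> RS \<delta>" using w by blast
      show ?thesis
      proof (cases "\<delta> \<in> cls \<alpha>")
        case False
        then show ?thesis using orth_RS[OF a b(1) d(1) False b(2) d(2)] z by simp
      next
        case dC: True
        have br: "br u w \<in> RS (rp (\<lambda>x. \<beta> x + \<delta> x) 1)" by (rule br_RS[OF b(2) d(2)])
        from gamma_cases[OF bL d(1)] show ?thesis
        proof (elim disjE)
          assume "rp (\<lambda>x. \<beta> x + \<delta> x) 1 \<in> Lam"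
          then have "rp (\<lambda>x. \<beta> x + \<delta> x) 1 \<in> cls \<alpha>" using cls_sum[OF a b(1) d(1)] by blast
          then show ?thesis using br RS_VP VP_LP by blast
        next
          assume "\<delta> = (\<lambda>x. - \<beta> x)"
          then have "br u w \<in> HP (cls \<alpha>)" using HP_gen_H[OF b(1) b(2)] d(2) by simp
          then show ?thesis by (rule HP_LP)
        next
          assume "RS (rp (\<lambda>x. \<beta> x + \<delta> x) 1) = {0}"
          then show ?thesis using br z by simp
        qed
      qed
    qed
  qed
qed

end



context setting begin

lemma up_neg: "up (\<lambda>x. - (\<beta>::'v \<Rightarrow> 'k) x) = (\<lambda>x. - up \<beta> x)" unfolding up_def by (rule ext) simp

lemma phi_VP: assumes a: "\<alpha> \<in> Lam" and x: "x \<in> VP (cls \<alpha>)" shows "phi x \<in> VP (cls \<alpha>)"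
proof (rule lin_ext[OF phi_add phi_scale _ VP_sub x[unfolded V_part_def]])
  fix w assume "w \<in> (\<Union>\<beta>\<in>cls \<alpha>. RS \<beta>)"
  then obtain \<beta> where b: "\<beta> \<in> cls \<alpha>" "w \<in> RS \<beta>" by blast
  show "phi w \<in> VP (cls \<alpha>)" using RS_VP[OF cls_rp[OF a b(1)] phi_RS[OF b(2)]] .
qed

lemma pinv_VP: assumes a: "\<alpha> \<in> Lam" and x: "x \<in> VP (cls \<alpha>)" shows "pinv x \<in> VP (cls \<alpha>)"
proof (rule lin_ext[OF pinv_add pinv_scale _ VP_sub x[unfolded V_part_def]])
  fix w assume "w \<in> (\<Union>\<beta>\<in>cls \<alpha>. RS \<beta>)"
  then obtain \<beta> where b: "\<beta> \<in> cls \<alpha>" "w \<in> RS \<beta>" by blast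
  show "pinv w \<in> VP (cls \<alpha>)" using RS_VP[OF cls_up[OF a b(1)] pinv_RS[OF b(2)]] .
qed

lemma phi_HP: assumes a: "\<alpha> \<in> Lam" and x: "x \<in> HP (cls \<alpha>)" shows "phi x \<in> HP (cls \<alpha>)"
proof (rule lin_ext[OF phi_add phi_scale _ HP_sub x[unfolded H_part_def]])
  fix w assume "w \<in> {br x y | x y \<beta>. \<beta> \<in> cls \<alpha> \<and> x \<in> RS \<beta> \<and> y \<in> RS (\<lambda>h. - \<beta> h)}"
  then obtain u v \<beta> where b: "w = br u v" "\<beta> \<in> cls \<alpha>" "u \<in> RS \<beta>" "v \<in> RS (\<lambda>h. - \<beta> h)" by blast
  have "phi v \<in> RS (rp (\<lambda>h. - \<beta> h) 1)" by (rule phi_RS[OF b(4)])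
  then have "phi v \<in> RS (\<lambda>h. - rp \<beta> 1 h)" by (simp add: rp_neg)
  then show "phi w \<in> HP (cls \<alpha>)" unfolding b(1) phi_br
    by (rule HP_gen_H[OF cls_rp[OF a b(2)] phi_RS[OF b(3)]])
qed

lemma pinv_br: "pinv (br x y) = br (pinv x) (pinv y)"
  by (rule phi_inj) (simp add: phi_br)

lemma pinv_HP: assumes a: "\<alpha> \<in> Lam" and x: "x \<in> HP (cls \<alpha>)" shows "pinv x \<in> HP (cls \<alpha>)"
proof (rule lin_ext[OF pinv_add pinv_scale _ HP_sub x[unfolded H_part_def]])
  fix w assume "w \<in> {br x y | x y \<beta>. \<beta> \<in> cls \<alpha> \<and> x \<in> RS \<beta> \<and> y \<in> RS (\<lambda>h. - \<beta> h)}"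
  then obtain u v \<beta> where b: "w = br u v" "\<beta> \<in> cls \<alpha>" "u \<in> RS \<beta>" "v \<in> RS (\<lambda>h. - \<beta> h)" by blast
  have "pinv v \<in> RS (up (\<lambda>h. - \<beta> h))" by (rule pinv_RS[OF b(4)])
  then have "pinv v \<in> RS (\<lambda>h. - up \<beta> h)" by (simp add: up_neg)
  then show "pinv w \<in> HP (cls \<alpha>)" unfolding b(1) pinv_br
    by (rule HP_gen_H[OF cls_up[OF a b(2)] pinv_RS[OF b(3)]])
qed

lemma phi_LP: assumes a: "\<alpha> \<in> Lam" shows "phi ` LP (cls \<alpha>) = LP (cls \<alpha>)"
proof (intro set_eqI iffI)
  fix y assume "y \<in> phi ` LP (cls \<alpha>)"
  then obtain x where x: "x \<in> LP (cls \<alpha>)" "y = phi x" by blast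
  then obtain h v where hv: "h \<in> HP (cls \<alpha>)" "v \<in> VP (cls \<alpha>)" "x = h + v" by (elim LP_E)
  have "y = phi h + phi v" using x hv by (simp add: phi_add)
  then show "y \<in> LP (cls \<alpha>)" unfolding L_part_def using phi_HP[OF a hv(1)] phi_VP[OF a hv(2)] by blast
next
  fix y assume "y \<in> LP (cls \<alpha>)"
  then obtain h v where hv: "h \<in> HP (cls \<alpha>)" "v \<in> VP (cls \<alpha>)" "y = h + v" by (elim LP_E)
  have "pinv h + pinv v \<in> LP (cls \<alpha>)" unfolding L_part_def using pinv_HP[OF a hv(1)] pinv_VP[OF a hv(2)] by blast
  moreover have "y = phi (pinv h + pinv v)" using hv by (simp add: phi_add)
  ultimately show "y \<in> phi ` LP (cls \<alpha>)" by blast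
qed

lemma LP_ideal: assumes a: "\<alpha> \<in> Lam" shows "ideal sc Lg br phi (LP (cls \<alpha>))"
  unfolding ideal_def graded_subspace_def
  using LP_sub LP_graded LP_closed[OF a] phi_LP[OF a] by blast

lemma RS_HP_orth:
  assumes a: "\<alpha> \<in> Lam" "\<delta> \<in> Lam" "\<delta> \<notin> cls \<alpha>" and v: "v \<in> RS \<delta>" and h: "h \<in> HP (cls \<alpha>)"
  shows "br v h = 0"
proof -
  have s0: "subspace {0::'v}" by simp
  have hom: "\<And>v g h k. v \<in> RS \<delta> \<Longrightarrow> v \<in> Lg g \<Longrightarrow> h \<in> HP (cls \<alpha>) \<Longrightarrow> h \<in> Lg k \<Longrightarrow> br v h = 0"
  proof -
    fix v g h k assume "v \<in> RS \<delta>" "v \<in> Lg g" "h \<in> HP (cls \<alpha>)" "h \<in> Lg k"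
    then show "br v h = 0" using skew[of v g h k] HP_orth[OF a, of h v] by simp
  qed
  have "\<And>v g. v \<in> RS \<delta> \<Longrightarrow> v \<in> Lg g \<Longrightarrow> br v h \<in> {0}"
  proof -
    fix v g assume vv: "v \<in> RS \<delta>" "v \<in> Lg g"
    show "br v h \<in> {0}"
      by (rule lin_ext[OF br_lin2 br_scale2 _ s0 HP_graded[THEN subsetD, OF h]]) (use hom vv in blast)
  qed
  then have "(\<lambda>v. br v h) v \<in> {0}"
    by (intro lin_ext_RS[where \<beta>=\<delta>, OF br_lin1 br_scale1 _ s0 v])
  then show ?thesis by simp
qed

end



context setting begin

lemma LP_span: "LP C \<subseteq> span (HP C \<union> (\<Union>\<beta>\<in>C. RS \<beta>))"
proof
  fix w assume "w \<in> LP C"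
  then obtain h v where hv: "h \<in> HP C" "v \<in> VP C" "w = h + v" by (rule LP_E)
  have "h \<in> span (HP C \<union> (\<Union>\<beta>\<in>C. RS \<beta>))" using hv(1) by (auto intro: span_base)
  moreover have "v \<in> span (HP C \<union> (\<Union>\<beta>\<in>C. RS \<beta>))"
    using hv(2) unfolding V_part_def using span_mono[of "\<Union>\<beta>\<in>C. RS \<beta>" "HP C \<union> (\<Union>\<beta>\<in>C. RS \<beta>)"] by blast
  ultimately show "w \<in> span (HP C \<union> (\<Union>\<beta>\<in>C. RS \<beta>))" using hv(3) span_add by simp
qed

lemma LP_orth:
  assumes a: "\<alpha> \<in> Lam" "\<gamma> \<in> Lam" "cls \<alpha> \<noteq> cls \<gamma>" and x: "x \<in> LP (cls \<alpha>)" and y: "y \<in> LP (cls \<gamma>)"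
  shows "br x y = 0"
proof -
  have "br x y \<in> {0}"
  proof (rule bil[OF LP_span LP_span _ _ x y])
    show "subspace {0::'v}" by simp
  next
    fix u w assume u: "u \<in> HP (cls \<alpha>) \<union> (\<Union>\<beta>\<in>cls \<alpha>. RS \<beta>)" and w: "w \<in> HP (cls \<gamma>) \<union> (\<Union>\<delta>\<in>cls \<gamma>. RS \<delta>)"
    show "br u w \<in> {0}"
    proof (cases "u \<in> HP (cls \<alpha>)")
      case uH: True
      show ?thesis
      proof (cases "w \<in> HP (cls \<gamma>)")
        case True then show ?thesis using uH HP_H H_ab by blast
      next
        case False
        then obtain \<delta> where d: "\<delta> \<in> cls \<gamma>" "w \<in> RS \<delta>" using w by blast
        have "\<delta> \<notin> cls \<alpha>" using cls_disj[OF a(2,1)] a(3) d(1) by metis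
        then show ?thesis using HP_orth[OF a(1) cls_Lam[OF d(1)] _ uH d(2)] by simp
      qed
    next
      case False
      then obtain \<beta> where b: "\<beta> \<in> cls \<alpha>" "u \<in> RS \<beta>" using u by blast
      have bn: "\<beta> \<notin> cls \<gamma>" using cls_disj[OF a(1,2,3) b(1)] .
      show ?thesis
      proof (cases "w \<in> HP (cls \<gamma>)")
        case True then show ?thesis using RS_HP_orth[OF a(2) cls_Lam[OF b(1)] bn b(2) True] by simp
      next
        case False
        then obtain \<delta> where d: "\<delta> \<in> cls \<gamma>" "w \<in> RS \<delta>" using w by blast
        have "\<delta> \<notin> cls \<alpha>" using cls_disj[OF a(2,1)] a(3) d(1) by metis
        then show ?thesis using orth_RS[OF a(1) b(1) cls_Lam[OF d(1)] _ b(2) d(2)] by simp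
      qed
    qed
  qed
  then show ?thesis by simp
qed

definition I where "I = {cls \<alpha> | \<alpha>. \<alpha> \<in> Lam}"

lemma I_mem: "\<alpha> \<in> Lam \<Longrightarrow> cls \<alpha> \<in> I" unfolding I_def by blast
lemma I_E: "C \<in> I \<Longrightarrow> (\<And>\<alpha>. \<alpha> \<in> Lam \<Longrightarrow> C = cls \<alpha> \<Longrightarrow> P) \<Longrightarrow> P" unfolding I_def by blast

lemma span_LP: "UNIV \<subseteq> span (\<Union>C\<in>I. LP C)"
proof -
  define Z where "Z = span (\<Union>C\<in>I. LP C)"
  have inZ: "\<And>\<beta> w. \<beta> \<in> Lam \<Longrightarrow> w \<in> LP (cls \<beta>) \<Longrightarrow> w \<in> Z"
    unfolding Z_def using I_mem by (blast intro: span_base)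
  have z: "0 \<in> Z" unfolding Z_def by (rule span_zero)
  have RSZ: "\<And>\<beta> w. \<beta> \<in> Lam \<Longrightarrow> w \<in> RS \<beta> \<Longrightarrow> w \<in> Z"
    using inZ RS_VP VP_LP cls_self by blast
  have "\<And>x y. br x y \<in> Z"
  proof -
    fix x y
    show "br x y \<in> Z"
    proof (rule bil[of UNIV "H \<union> (\<Union>\<delta>\<in>Lam. RS \<delta>)" UNIV "H \<union> (\<Union>\<delta>\<in>Lam. RS \<delta>)"])
      show "UNIV \<subseteq> span (H \<union> (\<Union>\<delta>\<in>Lam. RS \<delta>))" using span_all by simp
      show "UNIV \<subseteq> span (H \<union> (\<Union>\<delta>\<in>Lam. RS \<delta>))" using span_all by simp
      show "subspace Z" unfolding Z_def by simp
      show "x \<in> UNIV" "y \<in> UNIV" by auto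
    next
      fix u w assume u: "u \<in> H \<union> (\<Union>\<delta>\<in>Lam. RS \<delta>)" and w: "w \<in> H \<union> (\<Union>\<delta>\<in>Lam. RS \<delta>)"
      show "br u w \<in> Z"
      proof (cases "u \<in> H")
        case uH: True
        show ?thesis
        proof (cases "w \<in> H")
          case True then show ?thesis using uH H_ab z by simp
        next
          case False
          then obtain \<delta> where d: "\<delta> \<in> Lam" "w \<in> RS \<delta>" using w by blast
          show ?thesis using RSZ[OF rp_Lam[OF d(1)] H_RS_br[OF uH d(2)]] .
        qed
      next
        case False
        then obtain \<beta> where b: "\<beta> \<in> Lam" "u \<in> RS \<beta>" using u by blast
        show ?thesis
        proof (cases "w \<in> H")
          case True
          show ?thesis using RSZ[OF rp_Lam[OF b(1)] RS_H_br[OF b(2) Lam_D[OF b(1)] True]] .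
        next
          case False
          then obtain \<delta> where d: "\<delta> \<in> Lam" "w \<in> RS \<delta>" using w by blast
          have br: "br u w \<in> RS (rp (\<lambda>x. \<beta> x + \<delta> x) 1)" by (rule br_RS[OF b(2) d(2)])
          from gamma_cases[OF b(1) d(1)] show ?thesis
          proof (elim disjE)
            assume "rp (\<lambda>x. \<beta> x + \<delta> x) 1 \<in> Lam"
            then show ?thesis using RSZ br by blast
          next
            assume "\<delta> = (\<lambda>x. - \<beta> x)"
            then have "br u w \<in> HP (cls \<beta>)" using HP_gen_H[OF cls_self[OF b(1)] b(2)] d(2) by simp
            then show ?thesis using inZ[OF b(1)] HP_LP by blast
          next
            assume "RS (rp (\<lambda>x. \<beta> x + \<delta> x) 1) = {0}"
            then show ?thesis using br z by simp
          qed
        qed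
      qed
    qed
  qed
  then have "span {br x y | x y. True} \<subseteq> Z" unfolding Z_def by (intro span_minimal) auto
  then show ?thesis using der unfolding derived_def Z_def by simp
qed

end



context setting begin

lemma UN_None: "(\<Union>i\<in>{None}. W i) = H" by simp
lemma UN_Some: "(\<Union>i\<in>Some ` X. W i) = (\<Union>\<beta>\<in>X. RS \<beta>)" by auto
lemma J_sub1: "{None} \<subseteq> J" unfolding J_def by auto
lemma J_sub2: "X \<subseteq> Lam \<Longrightarrow> Some ` X \<subseteq> J" unfolding J_def by auto

lemma VH_disj: "x \<in> H \<Longrightarrow> x \<in> span (\<Union>\<beta>\<in>Lam. RS \<beta>) \<Longrightarrow> x = 0"
proof -
  assume x: "x \<in> H" "x \<in> span (\<Union>\<beta>\<in>Lam. RS \<beta>)"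
  have "x \<in> span (\<Union>i\<in>{None}. W i)" unfolding UN_None using x(1) by (rule span_base)
  moreover have "x \<in> span (\<Union>i\<in>Some ` Lam. W i)" unfolding UN_Some using x(2) .
  moreover have "{None} \<inter> Some ` Lam = {}" by auto
  ultimately show ?thesis
    using indep_disjoint[OF spl_parts(1) spl_parts(2) J_sub1 J_sub2[OF subset_refl]] by blast
qed

lemma VV_disj: "A \<subseteq> Lam \<Longrightarrow> B \<subseteq> Lam \<Longrightarrow> A \<inter> B = {} \<Longrightarrow> x \<in> span (\<Union>\<beta>\<in>A. RS \<beta>) \<Longrightarrow> x \<in> span (\<Union>\<beta>\<in>B. RS \<beta>) \<Longrightarrow> x = 0"
proof -
  assume a: "A \<subseteq> Lam" "B \<subseteq> Lam" "A \<inter> B = {}" "x \<in> span (\<Union>\<beta>\<in>A. RS \<beta>)" "x \<in> span (\<Union>\<beta>\<in>B. RS \<beta>)"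
  have "x \<in> span (\<Union>i\<in>Some ` A. W i)" unfolding UN_Some using a(4) .
  moreover have "x \<in> span (\<Union>i\<in>Some ` B. W i)" unfolding UN_Some using a(5) .
  moreover have "Some ` A \<inter> Some ` B = {}" using a(3) by auto
  ultimately show ?thesis
    using indep_disjoint[OF spl_parts(1) spl_parts(2) J_sub2[OF a(1)] J_sub2[OF a(2)]] by blast
qed

lemma cls_sub: "C \<in> I \<Longrightarrow> C \<subseteq> Lam" by (elim I_E) (auto intro: cls_Lam)

lemma I_disj: "C \<in> I \<Longrightarrow> C' \<in> I \<Longrightarrow> C \<noteq> C' \<Longrightarrow> C \<inter> C' = {}"
proof -
  assume a: "C \<in> I" "C' \<in> I" "C \<noteq> C'"
  obtain \<alpha> where al: "\<alpha> \<in> Lam" "C = cls \<alpha>" using a(1) by (rule I_E)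
  obtain \<gamma> where ga: "\<gamma> \<in> Lam" "C' = cls \<gamma>" using a(2) by (rule I_E)
  show ?thesis using cls_disj[OF al(1) ga(1)] a(3) al ga by blast
qed

lemma VP_span_mono: "C \<subseteq> X \<Longrightarrow> x \<in> VP C \<Longrightarrow> x \<in> span (\<Union>\<beta>\<in>X. RS \<beta>)"
  unfolding V_part_def using span_mono[of "\<Union>\<beta>\<in>C. RS \<beta>" "\<Union>\<beta>\<in>X. RS \<beta>"] by blast

lemma LP_indep:
  assumes F: "finite F" "F \<subseteq> I" and w: "\<forall>C\<in>F. w C \<in> LP C" and s: "sum w F = 0"
  shows "\<forall>C\<in>F. w C = 0"
proof -
  have "\<forall>C\<in>F. \<exists>p. fst p \<in> HP C \<and> snd p \<in> VP C \<and> w C = fst p + snd p"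
  proof
    fix C assume "C \<in> F"
    then have "w C \<in> LP C" using w by blast
    then obtain h v where "h \<in> HP C" "v \<in> VP C" "w C = h + v" by (rule LP_E)
    then show "\<exists>p. fst p \<in> HP C \<and> snd p \<in> VP C \<and> w C = fst p + snd p" by (intro exI[of _ "(h, v)"]) simp
  qed
  from bchoice[OF this] obtain f where f: "\<forall>C\<in>F. fst (f C) \<in> HP C \<and> snd (f C) \<in> VP C \<and> w C = fst (f C) + snd (f C)" by blast
  define h where "h C = fst (f C)" for C
  define v where "v C = snd (f C)" for C
  have hv: "\<And>C. C \<in> F \<Longrightarrow> h C \<in> HP C" "\<And>C. C \<in> F \<Longrightarrow> v C \<in> VP C" "\<And>C. C \<in> F \<Longrightarrow> w C = h C + v C"
    using f unfolding h_def v_def by auto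
  have hH: "\<And>C. C \<in> F \<Longrightarrow> h C \<in> H" using hv(1) HP_H by blast
  have "sum w F = sum h F + sum v F" using hv(3) by (simp add: sum.distrib)
  then have sv: "sum v F = - sum h F" using s by (simp add: eq_neg_iff_add_eq_0 add.commute)
  have sH: "sum h F \<in> H" by (rule subspace_sum[OF H_sub]) (rule hH)
  have sV: "sum v F \<in> span (\<Union>\<beta>\<in>Lam. RS \<beta>)"
  proof (rule span_sum)
    fix C assume C: "C \<in> F"
    then have "C \<in> I" using F(2) by blast
    then show "v C \<in> span (\<Union>\<beta>\<in>Lam. RS \<beta>)" by (rule VP_span_mono[OF cls_sub hv(2)[OF C]])
  qed
  have "sum v F \<in> H" unfolding sv using subspace_neg[OF H_sub sH] .
  then have sv0: "sum v F = 0" using VH_disj sV by blast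
  then have sh0: "sum h F = 0" using sv by simp
  show ?thesis
  proof
    fix C0 assume C0: "C0 \<in> F"
    obtain \<alpha> where al: "\<alpha> \<in> Lam" "C0 = cls \<alpha>" using C0 F(2) by (blast elim: I_E)
    have C0I: "C0 \<in> I" using C0 F(2) by blast
    have others: "\<And>C. C \<in> F - {C0} \<Longrightarrow> C \<subseteq> Lam - C0"
    proof -
      fix C assume C: "C \<in> F - {C0}"
      then have CI: "C \<in> I" "C \<noteq> C0" using F(2) by auto
      have "C \<inter> C0 = {}" by (rule I_disj[OF CI(1) C0I CI(2)])
      moreover have "C \<subseteq> Lam" by (rule cls_sub[OF CI(1)])
      ultimately show "C \<subseteq> Lam - C0" by blast
    qed
    have "v C0 = - sum v (F - {C0})" using sv0 sum.remove[OF F(1) C0, of v] by (simp add: eq_neg_iff_add_eq_0)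
    moreover have "sum v (F - {C0}) \<in> span (\<Union>\<beta>\<in>Lam - C0. RS \<beta>)"
    proof (rule span_sum)
      fix C assume C: "C \<in> F - {C0}"
      show "v C \<in> span (\<Union>\<beta>\<in>Lam - C0. RS \<beta>)" by (rule VP_span_mono[OF others[OF C] hv(2)]) (use C in blast)
    qed
    ultimately have v1: "v C0 \<in> span (\<Union>\<beta>\<in>Lam - C0. RS \<beta>)" using span_neg by simp
    have v2: "v C0 \<in> span (\<Union>\<beta>\<in>C0. RS \<beta>)" using hv(2)[OF C0] unfolding V_part_def .
    have dj: "C0 \<inter> (Lam - C0) = {}" by blast
    have vz: "v C0 = 0" by (rule VV_disj[OF cls_sub[OF C0I] Diff_subset dj v2 v1])
    have hC0: "h C0 = - sum h (F - {C0})" using sh0 sum.remove[OF F(1) C0, of h] by (simp add: eq_neg_iff_add_eq_0)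
    have "\<And>y. br (h C0) y \<in> {0}"
    proof -
      fix y
      have yy: "y \<in> span (H \<union> (\<Union>\<delta>\<in>Lam. RS \<delta>))" using span_all by simp
      show "br (h C0) y \<in> {0}"
      proof (rule lin_ext[OF br_lin2 br_scale2 _ _ yy])
        show "subspace {0::'v}" by simp
      next
        fix u assume u: "u \<in> H \<union> (\<Union>\<delta>\<in>Lam. RS \<delta>)"
        show "br (h C0) u \<in> {0}"
        proof (cases "u \<in> H")
          case True then show ?thesis using H_ab hH[OF C0] by simp
        next
          case False
          then obtain \<delta> where d: "\<delta> \<in> Lam" "u \<in> RS \<delta>" using u by blast
          show ?thesis
          proof (cases "\<delta> \<in> C0")
            case False
            then show ?thesis using HP_orth[OF al(1) d(1) _ _ d(2), of "h C0"] hv(1)[OF C0] al(2) by simp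
          next
            case True
            have "\<And>C. C \<in> F - {C0} \<Longrightarrow> br (h C) u = 0"
            proof -
              fix C assume C: "C \<in> F - {C0}"
              obtain \<gamma> where ga: "\<gamma> \<in> Lam" "C = cls \<gamma>" using C F(2) by (blast elim: I_E)
              have "\<delta> \<notin> C" using others[OF C] True by blast
              then show "br (h C) u = 0" using HP_orth[OF ga(1) d(1) _ _ d(2), of "h C"] hv(1) C ga(2) by simp
            qed
            then have "br (h C0) u = - (\<Sum>C\<in>F - {C0}. br (h C) u)" unfolding hC0 by (simp add: br_neg1 br_sum1)
            also have "\<dots> = 0" using \<open>\<And>C. C \<in> F - {C0} \<Longrightarrow> br (h C) u = 0\<close> by simp
            finally show ?thesis by simp
          qed
        qed
      qed
    qed
    then have "h C0 \<in> annihilator br" unfolding annihilator_def by simp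
    then have hz: "h C0 = 0" using ann by simp
    show "w C0 = 0" using hv(3)[OF C0] vz hz by simp
  qed
qed

lemma main_locale:
  "internal_direct_sum sc I LP UNIV
   \<and> (\<forall>\<alpha>\<in>Lam. ideal sc Lg br phi (LP (cls \<alpha>)))
   \<and> (\<forall>\<alpha>\<in>Lam. \<forall>\<beta>\<in>Lam. cls \<alpha> \<noteq> cls \<beta> \<longrightarrow> (\<forall>x\<in>LP (cls \<alpha>). \<forall>y\<in>LP (cls \<beta>). br x y = 0))"
proof (intro conjI ballI impI)
  show "internal_direct_sum sc I LP UNIV" unfolding internal_direct_sum_def
  proof (intro conjI ballI allI impI)
    show "\<And>C. subspace (LP C)" by (rule LP_sub)
    show "UNIV = span (\<Union>C\<in>I. LP C)" using span_LP by blast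
  next
    fix F w i assume A: "finite F \<and> F \<subseteq> I \<and> (\<forall>i\<in>F. w i \<in> LP i) \<and> sum w F = 0" and i: "i \<in> F"
    have "\<forall>i\<in>F. w i = 0" by (rule LP_indep) (use A in auto)
    then show "w i = 0" using i by blast
  qed
next
  fix \<alpha> assume "\<alpha> \<in> Lam" then show "ideal sc Lg br phi (LP (cls \<alpha>))" by (rule LP_ideal)
next
  fix \<alpha> \<beta> x y assume "\<alpha> \<in> Lam" "\<beta> \<in> Lam" "cls \<alpha> \<noteq> cls \<beta>" "x \<in> LP (cls \<alpha>)" "y \<in> LP (cls \<beta>)"
  then show "br x y = 0" by (rule LP_orth)
qed

end
theorem mainTheorem11:
  fixes sc :: "'k::field \<Rightarrow> 'v::ab_group_add \<Rightarrow> 'v"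
    and Lg :: "'g::ab_group_add \<Rightarrow> 'v set"
    and br :: "'v \<Rightarrow> 'v \<Rightarrow> 'v" and phi :: "'v \<Rightarrow> 'v"
    and eps :: "'g \<Rightarrow> 'g \<Rightarrow> 'k" and H :: "'v set"
  assumes "regular_hlca sc Lg br phi eps"
    and "max_abelian_subalgebra sc Lg br phi H"
    and "split_wrt sc Lg br phi H"
    and "symmetric_roots sc Lg br phi H"
    and "annihilator br = {0}"
    and "derived sc br = UNIV"
  shows "internal_direct_sum sc
           {root_class sc Lg br phi H \<alpha> | \<alpha>. \<alpha> \<in> roots sc Lg br phi H}
           (L_part sc Lg br phi H) UNIV
       \<and> (\<forall>\<alpha>\<in>roots sc Lg br phi H.
            ideal sc Lg br phi (L_part sc Lg br phi H (root_class sc Lg br phi H \<alpha>)))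
       \<and> (\<forall>\<alpha>\<in>roots sc Lg br phi H. \<forall>\<beta>\<in>roots sc Lg br phi H.
            root_class sc Lg br phi H \<alpha> \<noteq> root_class sc Lg br phi H \<beta> \<longrightarrow>
            (\<forall>x\<in>L_part sc Lg br phi H (root_class sc Lg br phi H \<alpha>).
             \<forall>y\<in>L_part sc Lg br phi H (root_class sc Lg br phi H \<beta>). br x y = 0))"
proof -
  have vs: "vector_space sc" using assms(1) unfolding regular_hlca_def hom_lie_color_algebra_def by (elim conjE) assumption
  have st: "setting sc Lg br phi eps H"
    by (rule setting.intro[OF vs setting_axioms.intro]) (rule assms)+
  have Ieq: "setting.I sc Lg br phi H = {root_class sc Lg br phi H \<alpha> | \<alpha>. \<alpha> \<in> roots sc Lg br phi H}"
    by (rule setting.I_def[OF st])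
  show ?thesis using setting.main_locale[OF st] unfolding Ieq .
qed


end
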